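(* Let $q\ge 0$. (a) For $\mu,\mu'\in(\mathbb R\setminus\{0\})^q$, the Lie algebras $\mathfrak{osc}_{1,q}(1,\mu)$ and $\mathfrak{osc}_{1,q}(1,\mu')$ are isomorphic as Lie algebras if and only if they are isomorphic as metric Lie algebras. (b) For $\mu,\mu'\in((\mathbb R^2)^*\setminus\{0\})^q$, the Lie algebras $\mathfrak{osc}^2_{q}(\mu)$ and $\mathfrak{osc}^2_{q}(\mu')$ are isomorphic as Lie algebras if and only if they are isomorphic as metric Lie algebras. (c) For $\mu,\mu'\in((\mathbb R^2)^*\setminus\{0\})^q$, the Lie algebras $\mathfrak d_q(\mu)$ and $\mathfrak d_q(\mu')$ are isomorphic as Lie algebras if and only if $\mu(\mathbb R^2)=\mu'(\mathbb R^2)$ modulo the action of $S_q\ltimes(\mathbb Z_2)^q$.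
   Context: A metric Lie algebra is a real Lie algebra with a non-degenerate (not necessarily definite) ad-invariant symmetric bilinear form; an isomorphism of metric Lie algebras is a Lie algebra isomorphism that is also an isometry. Definition of $\mathfrak{osc}_{1,q}(1,\mu)$: for $\mu=(\mu_1,\dots,\mu_q)\in(\mathbb R\setminus\{0\})^q$, let $\mathfrak a=\mathbb C^{1+q}$, viewed as a real vector space of dimension $2q+2$, with inner product $\langle z,w\rangle_{\mathfrak a}=\mathrm{Re}z_0\,\mathrm{Re}w_0-\mathrm{Im}z_0\,\mathrm{Im}w_0+\sum_{j=1}^q\mathrm{Re}(z_j\bar w_j)$. Define $L(z_0,\dots,z_q)=i(\bar z_0,\mu_1z_1,\dots,\mu_qz_q)$. Then $\mathfrak{osc}_{1,q}(1,\mu)=\mathbb R\oplus\mathfrak a\oplus\mathbb R$, with elements $(z,a,t)$. The first summand is central, and the remaining brackets are $[t,a]=tL(a)\in\mathfrak a$, $[a,a']=\langle La,a'\rangle_{\mathfrak a}\in\mathbb R$ (first summand), and $[t,t']=0$. The invariant metric is $\langle(z,a,t),(z',a',t')\rangle=zt'+z't+\langle a,a'\rangle_{\mathfrak a}$. Definition of $\mathfrak{osc}^2_q(\mu)$: for $\mu=(\mu_1,\dots,\mu_q)$ with $\mu_j\in(\mathbb R^2)^*$, set $\mathfrak l=\mathbb R^2$, $\mathfrak z=\mathfrak l^*$, and $\mathfrak a^{2q}=\mathbb C^q$ with the Euclidean inner product $\langle z,w\rangle=\mathrm{Re}\sum_j z_j\bar w_j$. Let $\rho(t)(z_1,\dots,z_q)=i(\mu_1(t)z_1,\dots,\mu_q(t)z_q)$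 for $t\in\mathfrak l$, and define $\omega(a,a')\in\mathfrak z$ by $\omega(a,a')(t)=\langle\rho(t)a,a'\rangle$. Then $\mathfrak{osc}^2_q(\mu)=\mathfrak z\oplus\mathfrak a^{2q}\oplus\mathfrak l$, with $\mathfrak z$ central and the remaining brackets $[\mathfrak l,\mathfrak l]=0$, $[t,a]=\rho(t)a$, $[a,a']=\omega(a,a')$. The metric is $\langle(z,a,t),(z',a',t')\rangle=z(t')+z'(t)+\langle a,a'\rangle$. Definition of $\mathfrak d_q(\mu)$: with $\mathfrak l,\mathfrak z,\mathfrak a^{2q},\rho,\omega$ as in the previous paragraph, let $\mathfrak a_0=\mathbb R$ and $\alpha(t,t')=t_1t_2'-t_2t_1'$ for $t,t'\in\mathbb R^2$, so that $\alpha(e_1,e_2)=1$. For $t\in\mathfrak l$, define $t^\flat\in\mathfrak z$ by $t^\flat(t')=\alpha(t,t')$. Then $\mathfrak d_q(\mu)=\mathfrak z\oplus\mathfrak a^{2q}\oplus\mathfrak a_0\oplus\mathfrak l$ with the following brackets: $\mathfrak z$ is central; $[a,a']=\omega(a,a')$ for $a,a'\in\mathfrak a^{2q}$; $\mathfrak a_0$ commutes with $\mathfrak a^{2q}\oplus\mathfrak a_0$; $[t,z+a+s]=-s\,t^\flat+\rho(t)a$ for $z\in\mathfrak z$, $a\in\mathfrak a^{2q}$, $s\in\mathfrak a_0$; and $[t,t']=\alpha(t,t')\in\mathfrak a_0$. The metric is $\langle(z,a,s,t),(z',a',s',t')\rangle=z(t')+z'(t)+\langle a,a'\rangle+ss'$.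 Notation: for $\mu\in((\mathbb R^2)^* )^q$, write $\mu(e_i)=(\mu_1(e_i),\dots,\mu_q(e_i))\in\mathbb R^q$, where $e_1,e_2$ is the standard basis of $\mathbb R^2$, and set $\mu(\mathbb R^2)=\mathrm{span}\{\mu(e_1),\mu(e_2)\}\subset\mathbb R^q$. The group $S_q$ acts on $\mathbb R^q$ by permuting coordinates, and $(\mathbb Z_2)^q=\{\pm1\}^q$ acts by coordinatewise multiplication. These actions induce an action of $S_q\ltimes(\mathbb Z_2)^q$ on linear subspaces of $\mathbb R^q$. *)

theory Defs
  imports "HOL-Analysis.Analysis" "HOL-Combinatorics.Permutations"
begin

record 'v mla =
  car    :: "'v set"
  vadd   :: "'v \<Rightarrow> 'v \<Rightarrow> 'v"
  vscale :: "real \<Rightarrow> 'v \<Rightarrow> 'v"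
  brk    :: "'v \<Rightarrow> 'v \<Rightarrow> 'v"
  frm    :: "'v \<Rightarrow> 'v \<Rightarrow> real"

definition lie_iso :: "('a, 'c) mla_scheme \<Rightarrow> ('b, 'd) mla_scheme \<Rightarrow> ('a \<Rightarrow> 'b) \<Rightarrow> bool" where
  "lie_iso A B f \<longleftrightarrow>
     bij_betw f (car A) (car B) \<and>
     (\<forall>x\<in>car A. \<forall>y\<in>car A. f (vadd A x y) = vadd B (f x) (f y)) \<and>
     (\<forall>c. \<forall>x\<in>car A. f (vscale A c x) = vscale B c (f x)) \<and>
     (\<forall>x\<in>car A. \<forall>y\<in>car A. f (brk A x y) = brk B (f x) (f y))"

definition metric_lie_iso :: "('a, 'c) mla_scheme \<Rightarrow> ('b, 'd) mla_scheme \<Rightarrow> ('a \<Rightarrow> 'b) \<Rightarrow> bool" where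
  "metric_lie_iso A B f \<longleftrightarrow> lie_iso A B f \<and>
     (\<forall>x\<in>car A. \<forall>y\<in>car A. frm B (f x) (f y) = frm A x y)"

definition lie_isomorphic :: "('a, 'c) mla_scheme \<Rightarrow> ('b, 'd) mla_scheme \<Rightarrow> bool" where
  "lie_isomorphic A B \<longleftrightarrow> (\<exists>f. lie_iso A B f)"

definition metric_isomorphic :: "('a, 'c) mla_scheme \<Rightarrow> ('b, 'd) mla_scheme \<Rightarrow> bool" where
  "metric_isomorphic A B \<longleftrightarrow> (\<exists>f. metric_lie_iso A B f)"

text \<open>Complex vectors are functions nat \<Rightarrow> complex; only finitely many
indices are used (the carrier conditions force the others to vanish).\<close>

definition cadd :: "(nat \<Rightarrow> complex) \<Rightarrow> (nat \<Rightarrow> complex) \<Rightarrow> nat \<Rightarrow> complex" where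
  "cadd a b = (\<lambda>j. a j + b j)"

definition cscale :: "real \<Rightarrow> (nat \<Rightarrow> complex) \<Rightarrow> nat \<Rightarrow> complex" where
  "cscale c a = (\<lambda>j. complex_of_real c * a j)"

definition cdiff :: "(nat \<Rightarrow> complex) \<Rightarrow> (nat \<Rightarrow> complex) \<Rightarrow> nat \<Rightarrow> complex" where
  "cdiff a b = (\<lambda>j. a j - b j)"

definition einner :: "nat \<Rightarrow> (nat \<Rightarrow> complex) \<Rightarrow> (nat \<Rightarrow> complex) \<Rightarrow> real" where
  "einner q a b = (\<Sum>j=1..q. Re (a j * cnj (b j)))"

text \<open>Elements (z, a, t); a is indexed by 0..q (a 0 = z_0, a j = z_j);
mu is indexed by 1..q.\<close>

definition osc1_inner :: "nat \<Rightarrow> (nat \<Rightarrow> complex) \<Rightarrow> (nat \<Rightarrow> complex) \<Rightarrow> real" where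
  "osc1_inner q a b = Re (a 0) * Re (b 0) - Im (a 0) * Im (b 0) + einner q a b"

definition osc1_L :: "nat \<Rightarrow> (nat \<Rightarrow> real) \<Rightarrow> (nat \<Rightarrow> complex) \<Rightarrow> nat \<Rightarrow> complex" where
  "osc1_L q \<mu> a = (\<lambda>j. if j = 0 then \<i> * cnj (a 0)
                       else if j \<le> q then \<i> * (complex_of_real (\<mu> j) * a j) else 0)"

definition osc1 :: "nat \<Rightarrow> (nat \<Rightarrow> real) \<Rightarrow> (real \<times> (nat \<Rightarrow> complex) \<times> real) mla" where
  "osc1 q \<mu> = \<lparr>
     car = {(z, a, t). \<forall>j>q. a j = 0},
     vadd = (\<lambda>(z, a, t) (z', a', t'). (z + z', cadd a a', t + t')),
     vscale = (\<lambda>c (z, a, t). (c * z, cscale c a, c * t)),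
     brk = (\<lambda>(z, a, t) (z', a', t').
              (osc1_inner q (osc1_L q \<mu> a) a',
               cdiff (cscale t (osc1_L q \<mu> a')) (cscale t' (osc1_L q \<mu> a)),
               0)),
     frm = (\<lambda>(z, a, t) (z', a', t'). z * t' + z' * t + osc1_inner q a a') \<rparr>"

text \<open>l = R^2 is represented by real \<times> real; the dual space
z = l^* is represented by real \<times> real via the dual basis:
the pair (u1,u2) is the functional t \<mapsto> u1 t1 + u2 t2. The same convention is
used for each mu_j.\<close>

definition dual_ap :: "real \<times> real \<Rightarrow> real \<times> real \<Rightarrow> real" where
  "dual_ap u t = fst u * fst t + snd u * snd t"

definition rho :: "nat \<Rightarrow> (nat \<Rightarrow> real \<times> real) \<Rightarrow> real \<times> real \<Rightarrow> (nat \<Rightarrow> complex) \<Rightarrow> nat \<Rightarrow> complex" where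
  "rho q \<mu> t a = (\<lambda>j. if 1 \<le> j \<and> j \<le> q then \<i> * (complex_of_real (dual_ap (\<mu> j) t) * a j) else 0)"

text \<open>omega(a,a') as element of the dual, given by its values on e1, e2.\<close>

definition omega :: "nat \<Rightarrow> (nat \<Rightarrow> real \<times> real) \<Rightarrow> (nat \<Rightarrow> complex) \<Rightarrow> (nat \<Rightarrow> complex) \<Rightarrow> real \<times> real" where
  "omega q \<mu> a a' = (einner q (rho q \<mu> (1, 0) a) a', einner q (rho q \<mu> (0, 1) a) a')"

definition osc2 :: "nat \<Rightarrow> (nat \<Rightarrow> real \<times> real) \<Rightarrow> ((real \<times> real) \<times> (nat \<Rightarrow> complex) \<times> (real \<times> real)) mla" where
  "osc2 q \<mu> = \<lparr>
     car = {(z, a, t). \<forall>j. (j = 0 \<or> j > q) \<longrightarrow> a j = 0},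
     vadd = (\<lambda>(z, a, t) (z', a', t'). (z + z', cadd a a', t + t')),
     vscale = (\<lambda>c (z, a, t). (c *\<^sub>R z, cscale c a, c *\<^sub>R t)),
     brk = (\<lambda>(z, a, t) (z', a', t').
              (omega q \<mu> a a', cdiff (rho q \<mu> t a') (rho q \<mu> t' a), (0, 0))),
     frm = (\<lambda>(z, a, t) (z', a', t'). dual_ap z t' + dual_ap z' t + einner q a a') \<rparr>"

definition alpha2 :: "real \<times> real \<Rightarrow> real \<times> real \<Rightarrow> real" where
  "alpha2 t t' = fst t * snd t' - snd t * fst t'"

text \<open>t^flat = alpha(t, -), written in the dual basis.\<close>

definition flat2 :: "real \<times> real \<Rightarrow> real \<times> real" where
  "flat2 t = (alpha2 t (1, 0), alpha2 t (0, 1))"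

definition dq :: "nat \<Rightarrow> (nat \<Rightarrow> real \<times> real) \<Rightarrow> ((real \<times> real) \<times> (nat \<Rightarrow> complex) \<times> real \<times> (real \<times> real)) mla" where
  "dq q \<mu> = \<lparr>
     car = {(z, a, s, t). \<forall>j. (j = 0 \<or> j > q) \<longrightarrow> a j = 0},
     vadd = (\<lambda>(z, a, s, t) (z', a', s', t'). (z + z', cadd a a', s + s', t + t')),
     vscale = (\<lambda>c (z, a, s, t). (c *\<^sub>R z, cscale c a, c * s, c *\<^sub>R t)),
     brk = (\<lambda>(z, a, s, t) (z', a', s', t').
              (omega q \<mu> a a' - s' *\<^sub>R flat2 t + s *\<^sub>R flat2 t',
               cdiff (rho q \<mu> t a') (rho q \<mu> t' a),
               alpha2 t t',
               (0, 0))),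
     frm = (\<lambda>(z, a, s, t) (z', a', s', t'). dual_ap z t' + dual_ap z' t + einner q a a' + s * s') \<rparr>"

text \<open>Vectors of R^q are functions nat \<Rightarrow> real supported on 1..q.
mu(R^2) = span{mu(e1), mu(e2)}.\<close>

definition mu_image :: "nat \<Rightarrow> (nat \<Rightarrow> real \<times> real) \<Rightarrow> (nat \<Rightarrow> real) set" where
  "mu_image q \<mu> = {(\<lambda>j. if 1 \<le> j \<and> j \<le> q then c1 * fst (\<mu> j) + c2 * snd (\<mu> j) else 0) | c1 c2. True}"

definition equiv_signed_perm :: "nat \<Rightarrow> (nat \<Rightarrow> real) set \<Rightarrow> (nat \<Rightarrow> real) set \<Rightarrow> bool" where
  "equiv_signed_perm q U U' \<longleftrightarrow>
     (\<exists>\<sigma> \<epsilon>. \<sigma> permutes {1..q} \<and> (\<forall>j. \<epsilon> j \<in> {-1, 1 :: real}) \<and>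
            (\<lambda>v j. \<epsilon> j * v (\<sigma> j)) ` U = U')"

end

theory Submission
  imports Defs "HOL-Library.Function_Algebras" "HOL-Combinatorics.Permutations"
begin


lemma cadd_eq: "cadd a b = a + b" by (simp add: cadd_def plus_fun_def)

interpretation CV: vector_space cscale
  by unfold_locales (auto simp: cscale_def fun_eq_iff algebra_simps)

definition SJ :: "nat set \<Rightarrow> (nat \<Rightarrow> complex) set" where
  "SJ J = {a. \<forall>j. j \<notin> J \<longrightarrow> a j = 0}"

definition dlt :: "nat \<Rightarrow> complex \<Rightarrow> nat \<Rightarrow> complex" where
  "dlt j w = (\<lambda>k. if k = j then w else 0)"

definition EJ :: "nat set \<Rightarrow> (nat \<Rightarrow> complex) set" where
  "EJ J = (\<lambda>j. dlt j 1) ` J \<union> (\<lambda>j. dlt j \<i>) ` J"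

definition prj :: "nat set \<Rightarrow> (nat \<Rightarrow> complex) \<Rightarrow> nat \<Rightarrow> complex" where
  "prj J a = (\<lambda>j. if j \<in> J then a j else 0)"

lemma card_EJ: assumes "finite J" shows "card (EJ J) = 2 * card J"
proof -
  have i1: "inj_on (\<lambda>j. dlt j 1) J" by (auto simp: inj_on_def dlt_def fun_eq_iff split: if_splits)
  have i2: "inj_on (\<lambda>j. dlt j \<i>) J" by (auto simp: inj_on_def dlt_def fun_eq_iff split: if_splits)
  have d: "(\<lambda>j. dlt j 1) ` J \<inter> (\<lambda>j. dlt j \<i>) ` J = {}"
    by (auto simp: dlt_def fun_eq_iff split: if_splits)
  show ?thesis unfolding EJ_def
    using assms by (subst card_Un_disjoint) (auto simp: card_image i1 i2 d)
qed

lemma sum_dlt_apply: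
  assumes "finite S" shows "(\<Sum>v\<in>S. f v) k = (\<Sum>v\<in>S. (f v) k)"
  using assms by (induction S rule: finite_induct) auto

lemma SJ_span: assumes "finite J" shows "SJ J \<subseteq> CV.span (EJ J)"
proof
  fix a assume a: "a \<in> SJ J"
  have "a = (\<Sum>j\<in>J. cscale (Re (a j)) (dlt j 1) + cscale (Im (a j)) (dlt j \<i>))"
  proof (rule ext, rule sym)
    fix k
    have "(\<Sum>j\<in>J. cscale (Re (a j)) (dlt j 1) + cscale (Im (a j)) (dlt j \<i>)) k
        = (\<Sum>j\<in>J. (cscale (Re (a j)) (dlt j 1) + cscale (Im (a j)) (dlt j \<i>)) k)"
      using assms by (rule sum_dlt_apply)
    also have "\<dots> = (\<Sum>j\<in>J. if j = k then a j else 0)"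
      by (intro sum.cong) (auto simp: cscale_def dlt_def complex_eq_iff)
    also have "\<dots> = a k" using a assms by (auto simp: SJ_def)
    finally show "(\<Sum>j\<in>J. cscale (Re (a j)) (dlt j 1) + cscale (Im (a j)) (dlt j \<i>)) k = a k" .
  qed
  also have "\<dots> \<in> CV.span (EJ J)"
    by (intro CV.span_sum CV.span_add CV.span_scale CV.span_base) (auto simp: EJ_def)
  finally show "a \<in> CV.span (EJ J)" .
qed

lemma EJ_sub: "EJ J \<subseteq> SJ J" by (auto simp: EJ_def SJ_def dlt_def)

lemma SJ_subspace: "CV.subspace (SJ J)"
  by (auto simp: CV.subspace_def SJ_def cscale_def)

lemma span_EJ: assumes "finite J" shows "CV.span (EJ J) = SJ J"
  using SJ_span[OF assms] CV.span_minimal[OF EJ_sub SJ_subspace] by auto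

lemma EJ_indep: assumes "finite J" shows "CV.independent (EJ J)"
proof -
  { fix S u assume S: "S \<subseteq> EJ J" "finite S" and su: "(\<Sum>v\<in>S. cscale (u v) v) = 0"
    have "\<forall>v\<in>S. u v = 0"
    proof
      fix v assume v: "v \<in> S"
      then obtain j w where j: "j \<in> J" "w \<in> {1, \<i>}" "v = dlt j w"
        using S v unfolding EJ_def by blast
      have "(\<Sum>v\<in>S. cscale (u v) v) j = 0" using su by simp
      hence "(\<Sum>v\<in>S. cscale (u v) v j) = 0" using sum_dlt_apply[OF S(2)] by metis
      moreover have "(\<Sum>v\<in>S. cscale (u v) v j) = (\<Sum>v\<in>S \<inter> {dlt j 1, dlt j \<i>}. cscale (u v) v j)"
      proof (rule sum.mono_neutral_right)
        have "\<And>v. v \<in> EJ J \<Longrightarrow> v j \<noteq> 0 \<Longrightarrow> v = dlt j 1 \<or> v = dlt j \<i>"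
          by (auto simp: EJ_def dlt_def split: if_splits)
        then show "\<forall>i\<in>S - S \<inter> {dlt j 1, dlt j \<i>}. cscale (u i) i j = 0"
          using S by (auto simp: cscale_def)
      qed (use S in auto)
      ultimately have z: "(\<Sum>v\<in>S \<inter> {dlt j 1, dlt j \<i>}. cscale (u v) v j) = 0" by simp
      have ne: "dlt j 1 \<noteq> dlt j \<i>" by (auto simp: dlt_def fun_eq_iff)
      show "u v = 0"
      proof (cases "dlt j 1 \<in> S"; cases "dlt j \<i> \<in> S")
        assume "dlt j 1 \<in> S" "dlt j \<i> \<in> S"
        then have "S \<inter> {dlt j 1, dlt j \<i>} = {dlt j 1, dlt j \<i>}" by auto
        with z ne have "complex_of_real (u (dlt j 1)) + complex_of_real (u (dlt j \<i>)) * \<i> = 0"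
          by (simp add: cscale_def dlt_def)
        hence "u (dlt j 1) = 0 \<and> u (dlt j \<i>) = 0" by (simp add: complex_eq_iff)
        then show ?thesis using j by auto
      next
        assume "dlt j 1 \<in> S" "dlt j \<i> \<notin> S"
        then have "S \<inter> {dlt j 1, dlt j \<i>} = {dlt j 1}" by auto
        with z have "u (dlt j 1) = 0" by (simp add: cscale_def dlt_def)
        then show ?thesis using j v \<open>dlt j \<i> \<notin> S\<close> by auto
      next
        assume "dlt j 1 \<notin> S" "dlt j \<i> \<in> S"
        then have "S \<inter> {dlt j 1, dlt j \<i>} = {dlt j \<i>}" by auto
        with z have "u (dlt j \<i>) = 0" by (simp add: cscale_def dlt_def)
        then show ?thesis using j v \<open>dlt j 1 \<notin> S\<close> by auto
      next
        assume "dlt j 1 \<notin> S" "dlt j \<i> \<notin> S"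
        then show ?thesis using j v by auto
      qed
    qed }
  then show ?thesis unfolding CV.independent_explicit_finite_subsets by blast
qed

lemma card_le_of_lin_inj:
  assumes J: "finite J" and K: "finite K"
    and into: "h ` SJ J \<subseteq> SJ K" and inj: "inj_on h (SJ J)"
    and add: "\<And>a b. a \<in> SJ J \<Longrightarrow> b \<in> SJ J \<Longrightarrow> h (cadd a b) = cadd (h a) (h b)"
    and sc: "\<And>c a. a \<in> SJ J \<Longrightarrow> h (cscale c a) = cscale c (h a)"
  shows "card J \<le> card K"
proof -
  define g where "g = h \<circ> prj J"
  have pin: "prj J a \<in> SJ J" for a by (auto simp: prj_def SJ_def)
  have pid: "a \<in> SJ J \<Longrightarrow> prj J a = a" for a by (auto simp: prj_def SJ_def fun_eq_iff)
  have lin: "Vector_Spaces.linear cscale cscale g"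
    unfolding Vector_Spaces.linear_iff
  proof (intro conjI allI)
    show "vector_space cscale" by unfold_locales
    show "vector_space cscale" by unfold_locales
    fix x y
    have "prj J (x + y) = cadd (prj J x) (prj J y)" by (auto simp: prj_def cadd_def fun_eq_iff)
    then show "g (x + y) = g x + g y" using add[OF pin pin] by (simp add: g_def cadd_eq)
  next
    fix c x
    have "prj J (cscale c x) = cscale c (prj J x)" by (auto simp: prj_def cscale_def fun_eq_iff)
    then show "g (cscale c x) = cscale c (g x)" using sc[OF pin] by (simp add: g_def)
  qed
  have injg: "inj_on g (CV.span (EJ J))" using inj unfolding span_EJ[OF J] g_def
    by (auto simp: inj_on_def pid)
  interpret VP: vector_space_pair cscale cscale by unfold_locales
  have ind: "CV.independent (g ` EJ J)"
    using VP.linear_independent_injective_image[OF lin EJ_indep[OF J] injg] .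
  have sub: "g ` EJ J \<subseteq> CV.span (EJ K)"
    using EJ_sub[of J] into pid unfolding span_EJ[OF K] g_def by fastforce
  have "card (g ` EJ J) \<le> card (EJ K)"
    using CV.independent_span_bound[OF _ ind sub] K by (auto simp: EJ_def)
  moreover have "card (g ` EJ J) = card (EJ J)"
    using injg CV.span_superset[of "EJ J"] by (intro card_image) (auto intro: inj_on_subset)
  ultimately show ?thesis using card_EJ[OF J] card_EJ[OF K] by simp
qed


definition closed_mla :: "('a, 'c) mla_scheme \<Rightarrow> bool" where
  "closed_mla A \<longleftrightarrow> (\<forall>x\<in>car A. \<forall>y\<in>car A. vadd A x y \<in> car A \<and> brk A x y \<in> car A)
     \<and> (\<forall>c. \<forall>x\<in>car A. vscale A c x \<in> car A)"

lemma lie_iso_inv: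
  assumes f: "lie_iso A B f" and cl: "closed_mla A"
  shows "lie_iso B A (inv_into (car A) f)"
proof -
  let ?g = "inv_into (car A) f"
  have bij: "bij_betw f (car A) (car B)" using f by (simp add: lie_iso_def)
  have bg: "bij_betw ?g (car B) (car A)" by (rule bij_betw_inv_into[OF bij])
  have gin: "u \<in> car B \<Longrightarrow> ?g u \<in> car A" for u using bg by (auto simp: bij_betw_def)
  have fg: "u \<in> car B \<Longrightarrow> f (?g u) = u" for u using bij by (simp add: bij_betw_inv_into_right)
  have gf: "x \<in> car A \<Longrightarrow> ?g (f x) = x" for x using bij bij_betw_inv_into_left by fastforce
  show ?thesis unfolding lie_iso_def
  proof (intro conjI ballI allI)
    show "bij_betw ?g (car B) (car A)" by fact
  next
    fix u v assume u: "u \<in> car B" and v: "v \<in> car B"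
    have "vadd B u v = f (vadd A (?g u) (?g v))"
      using f gin[OF u] gin[OF v] fg u v by (simp add: lie_iso_def)
    then show "?g (vadd B u v) = vadd A (?g u) (?g v)"
      using gf cl gin[OF u] gin[OF v] by (simp add: closed_mla_def)
  next
    fix u v assume u: "u \<in> car B" and v: "v \<in> car B"
    have "brk B u v = f (brk A (?g u) (?g v))"
      using f gin[OF u] gin[OF v] fg u v by (simp add: lie_iso_def)
    then show "?g (brk B u v) = brk A (?g u) (?g v)"
      using gf cl gin[OF u] gin[OF v] by (simp add: closed_mla_def)
  next
    fix c u assume u: "u \<in> car B"
    have "vscale B c u = f (vscale A c (?g u))"
      using f gin[OF u] fg u by (simp add: lie_iso_def)
    then show "?g (vscale B c u) = vscale A c (?g u)"
      using gf cl gin[OF u] by (simp add: closed_mla_def)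
  qed
qed

definition KS :: "('a, 'c) mla_scheme \<Rightarrow> 'a \<Rightarrow> real \<Rightarrow> 'a set" where
  "KS A X k = {Y\<in>car A. brk A X (brk A X Y) = vscale A k Y}"

lemma kern_map:
  assumes f: "lie_iso A B f" and cl: "closed_mla A" and X: "X \<in> car A" and Y: "Y \<in> KS A X k"
  shows "f Y \<in> KS B (f X) k"
proof -
  have Yc: "Y \<in> car A" using Y by (simp add: KS_def)
  have b1: "brk A X Y \<in> car A" using cl X Yc by (simp add: closed_mla_def)
  have "f Y \<in> car B" using f Yc by (auto simp: lie_iso_def bij_betw_def)
  moreover have "brk B (f X) (brk B (f X) (f Y)) = vscale B k (f Y)"
  proof -
    have "brk B (f X) (brk B (f X) (f Y)) = f (brk A X (brk A X Y))"
      using f X Yc b1 by (simp add: lie_iso_def)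
    also have "\<dots> = f (vscale A k Y)" using Y by (simp add: KS_def)
    also have "\<dots> = vscale B k (f Y)" using f Yc by (simp add: lie_iso_def)
    finally show ?thesis .
  qed
  ultimately show ?thesis by (simp add: KS_def)
qed

lemma dim_transfer:
  assumes f: "lie_iso A B f" and cl: "closed_mla A" and X: "X \<in> car A"
    and J: "finite J" and K: "finite K"
    and r: "\<And>a. a \<in> SJ J \<Longrightarrow> r a \<in> KS A X k"
    and radd: "\<And>a b. a \<in> SJ J \<Longrightarrow> b \<in> SJ J \<Longrightarrow> r (cadd a b) = vadd A (r a) (r b)"
    and rsc: "\<And>c a. a \<in> SJ J \<Longrightarrow> r (cscale c a) = vscale A c (r a)"
    and rinj: "inj_on r (SJ J)"
    and p: "\<And>Y. Y \<in> KS B (f X) k \<Longrightarrow> p Y \<in> SJ K"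
    and pinj: "inj_on p (KS B (f X) k)"
    and padd: "\<And>Y Z. Y \<in> car B \<Longrightarrow> Z \<in> car B \<Longrightarrow> p (vadd B Y Z) = cadd (p Y) (p Z)"
    and psc: "\<And>c Y. Y \<in> car B \<Longrightarrow> p (vscale B c Y) = cscale c (p Y)"
  shows "card J \<le> card K"
proof -
  have rc: "a \<in> SJ J \<Longrightarrow> r a \<in> car A" for a using r by (simp add: KS_def)
  have fc: "x \<in> car A \<Longrightarrow> f x \<in> car B" for x using f by (auto simp: lie_iso_def bij_betw_def)
  have fK: "a \<in> SJ J \<Longrightarrow> f (r a) \<in> KS B (f X) k" for a using kern_map[OF f cl X r] .
  show ?thesis
  proof (rule card_le_of_lin_inj[OF J K, of "\<lambda>a. p (f (r a))"])
    show "(\<lambda>a. p (f (r a))) ` SJ J \<subseteq> SJ K" using fK p by auto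
    show "inj_on (\<lambda>a. p (f (r a))) (SJ J)"
    proof (rule inj_onI)
      fix a b assume a: "a \<in> SJ J" and b: "b \<in> SJ J" and e: "p (f (r a)) = p (f (r b))"
      have "f (r a) = f (r b)" using inj_onD[OF pinj e fK[OF a] fK[OF b]] .
      then have "r a = r b" using f rc[OF a] rc[OF b] by (auto simp: lie_iso_def bij_betw_def inj_on_def)
      then show "a = b" using inj_onD[OF rinj _ a b] by simp
    qed
    fix a b assume a: "a \<in> SJ J" and b: "b \<in> SJ J"
    show "p (f (r (cadd a b))) = cadd (p (f (r a))) (p (f (r b)))"
      using radd[OF a b] f rc[OF a] rc[OF b] padd[OF fc[OF rc[OF a]] fc[OF rc[OF b]]]
      by (simp add: lie_iso_def)
  next
    fix c a assume a: "a \<in> SJ J"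
    show "p (f (r (cscale c a))) = cscale c (p (f (r a)))"
      using rsc[OF a] f rc[OF a] psc[OF fc[OF rc[OF a]]] by (simp add: lie_iso_def)
  qed
qed

lemma lie_iso_inv_app:
  assumes f: "lie_iso A B f" and X: "X \<in> car A"
  shows "inv_into (car A) f (f X) = X"
  using f X by (auto simp: lie_iso_def bij_betw_def)


lemma cnt_img: assumes "finite A"
  shows "count (image_mset f (mset_set A)) x = card {a\<in>A. f a = x}"
proof -
  have "count (image_mset f (mset_set A)) x = (\<Sum>y\<in>f -` {x} \<inter> A. 1)"
    using assms by (simp add: count_image_mset)
  also have "\<dots> = card (f -` {x} \<inter> A)" by simp
  also have "f -` {x} \<inter> A = {a\<in>A. f a = x}" by auto
  finally show ?thesis .
qed

lemma dual_ap_diff: "dual_ap (u - v) t = dual_ap u t - dual_ap v t"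
  by (simp add: dual_ap_def algebra_simps)
lemma dual_ap_add: "dual_ap (u + v) t = dual_ap u t + dual_ap v t"
  by (simp add: dual_ap_def algebra_simps)
lemma dual_ap_scale: "dual_ap (c *\<^sub>R u) t = c * dual_ap u t"
  by (simp add: dual_ap_def algebra_simps)
lemma dual_ap_minus: "dual_ap (- u) t = - dual_ap u t"
  by (simp add: dual_ap_def algebra_simps)

lemma line_zero_finite: assumes "w \<noteq> 0" shows "finite {x::real. dual_ap w (1, x) = 0}"
proof (cases "snd w = 0")
  case True
  then have "fst w \<noteq> 0" using assms by (cases w) (auto simp: zero_prod_def)
  then have "{x::real. dual_ap w (1, x) = 0} = {}" using True by (auto simp: dual_ap_def)
  then show ?thesis by simp
next
  case False
  have "{x::real. dual_ap w (1, x) = 0} \<subseteq> {- fst w / snd w}"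
    using False by (auto simp: dual_ap_def field_simps)
  then show ?thesis by (rule finite_subset) simp
qed

lemma gen_pt:
  fixes P N :: "(real \<times> real) set"
  assumes P: "finite P" and N: "finite N" and Nz: "0 \<notin> N"
  shows "\<exists>t. (\<forall>u\<in>N. dual_ap u t \<noteq> 0) \<and>
     (\<forall>u\<in>P. \<forall>v\<in>P. (dual_ap u t)\<^sup>2 = (dual_ap v t)\<^sup>2 \<longrightarrow> u = v \<or> u = - v)"
proof -
  define W where "W = N \<union> {u - v | u v. u\<in>P \<and> v\<in>P \<and> u \<noteq> v \<and> u \<noteq> - v}
     \<union> {u + v | u v. u\<in>P \<and> v\<in>P \<and> u \<noteq> v \<and> u \<noteq> - v}"
  have m1: "u\<in>P \<Longrightarrow> v\<in>P \<Longrightarrow> u - v \<in> (\<lambda>(u,v). u - v) ` (P \<times> P)" for u v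
    by (rule image_eqI[of _ _ "(u,v)"]) auto
  have m2: "u\<in>P \<Longrightarrow> v\<in>P \<Longrightarrow> u + v \<in> (\<lambda>(u,v). u + v) ` (P \<times> P)" for u v
    by (rule image_eqI[of _ _ "(u,v)"]) auto
  have f1: "finite {u - v | u v. u\<in>P \<and> v\<in>P \<and> u \<noteq> v \<and> u \<noteq> - v}"
  proof (rule finite_subset[of _ "(\<lambda>(u,v). u - v) ` (P \<times> P)"])
    show "{u - v | u v. u\<in>P \<and> v\<in>P \<and> u \<noteq> v \<and> u \<noteq> - v} \<subseteq> (\<lambda>(u,v). u - v) ` (P \<times> P)"
    proof (rule subsetI)
      fix x assume "x \<in> {u - v | u v. u\<in>P \<and> v\<in>P \<and> u \<noteq> v \<and> u \<noteq> - v}"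
      then obtain u v where "x = u - v" "u \<in> P" "v \<in> P" by blast
      then show "x \<in> (\<lambda>(u,v). u - v) ` (P \<times> P)" using m1 by simp
    qed
  qed (use P in simp)
  have f2: "finite {u + v | u v. u\<in>P \<and> v\<in>P \<and> u \<noteq> v \<and> u \<noteq> - v}"
  proof (rule finite_subset[of _ "(\<lambda>(u,v). u + v) ` (P \<times> P)"])
    show "{u + v | u v. u\<in>P \<and> v\<in>P \<and> u \<noteq> v \<and> u \<noteq> - v} \<subseteq> (\<lambda>(u,v). u + v) ` (P \<times> P)"
    proof (rule subsetI)
      fix x assume "x \<in> {u + v | u v. u\<in>P \<and> v\<in>P \<and> u \<noteq> v \<and> u \<noteq> - v}"
      then obtain u v where "x = u + v" "u \<in> P" "v \<in> P" by blast
      then show "x \<in> (\<lambda>(u,v). u + v) ` (P \<times> P)" using m2 by simp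
    qed
  qed (use P in simp)
  have W: "finite W" using N f1 f2 by (simp add: W_def)
  have Wz: "0 \<notin> W"
  proof
    assume "0 \<in> W"
    then have "(0 \<in> N \<or> (\<exists>u v. 0 = u - v \<and> u \<in> P \<and> v \<in> P \<and> u \<noteq> v \<and> u \<noteq> - v)) \<or>
       (\<exists>u v. 0 = u + v \<and> u \<in> P \<and> v \<in> P \<and> u \<noteq> v \<and> u \<noteq> - v)"
      unfolding W_def by (simp only: Un_iff mem_Collect_eq)
    moreover have a: "\<forall>u v::real\<times>real. 0 = u - v \<longrightarrow> u = v" by simp
    moreover have b: "\<forall>u v::real\<times>real. 0 = u + v \<longrightarrow> u = - v"
      by (auto simp: eq_neg_iff_add_eq_0)
    ultimately show False using Nz by blast
  qed
  have "finite (\<Union>w\<in>W. {x::real. dual_ap w (1, x) = 0})"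
    using W Wz line_zero_finite by (metis (no_types, lifting) finite_UN)
  then obtain x where x: "x \<notin> (\<Union>w\<in>W. {x::real. dual_ap w (1, x) = 0})"
    using ex_new_if_finite[OF infinite_UNIV_char_0] by blast
  show ?thesis
  proof (intro exI[of _ "(1, x)"] conjI ballI impI)
    fix u assume "u \<in> N" then show "dual_ap u (1, x) \<noteq> 0" using x by (auto simp: W_def)
  next
    fix u v assume u: "u \<in> P" and v: "v \<in> P" and e: "(dual_ap u (1, x))\<^sup>2 = (dual_ap v (1, x))\<^sup>2"
    show "u = v \<or> u = - v"
    proof (rule ccontr)
      assume ne: "\<not> (u = v \<or> u = - v)"
      have "(dual_ap u (1, x) - dual_ap v (1, x)) * (dual_ap u (1, x) + dual_ap v (1, x)) = 0"
        using e by (simp add: power2_eq_square algebra_simps)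
      then have "dual_ap (u - v) (1, x) = 0 \<or> dual_ap (u + v) (1, x) = 0"
        by (simp add: dual_ap_diff dual_ap_add)
      moreover have "u - v \<in> W" "u + v \<in> W" using u v ne unfolding W_def by blast+
      ultimately show False using x by blast
    qed
  qed
qed

lemma forms_match:
  fixes F G :: "nat \<Rightarrow> real \<times> real"
  assumes Fnz: "\<forall>j\<in>{1..q}. F j \<noteq> 0"
    and cnt: "\<And>t l. l > 0 \<Longrightarrow> card {j\<in>{1..q}. (dual_ap (F j) t)\<^sup>2 = l} = card {j\<in>{1..q}. (dual_ap (G j) t)\<^sup>2 = l}"
  shows "\<exists>\<sigma> \<epsilon>. \<sigma> permutes {1..q} \<and> (\<forall>j. \<epsilon> j \<in> {-1, 1::real}) \<and> (\<forall>j\<in>{1..q}. G j = \<epsilon> j *\<^sub>R F (\<sigma> j))"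
proof -
  have z0: "0 \<notin> F ` {1..q}" using Fnz by auto
  from gen_pt[of "F ` {1..q} \<union> G ` {1..q}" "F ` {1..q}", OF _ _ z0]
  obtain t where t1: "\<forall>u\<in>F ` {1..q}. dual_ap u t \<noteq> 0"
    and t2: "\<forall>u\<in>F ` {1..q} \<union> G ` {1..q}. \<forall>v\<in>F ` {1..q} \<union> G ` {1..q}.
               (dual_ap u t)\<^sup>2 = (dual_ap v t)\<^sup>2 \<longrightarrow> u = v \<or> u = - v"
    by blast
  define fv where "fv j = (dual_ap (F j) t)\<^sup>2" for j
  define gv where "gv j = (dual_ap (G j) t)\<^sup>2" for j
  define MF where "MF = image_mset fv (mset_set {1..q})"
  define MG where "MG = image_mset gv (mset_set {1..q})"
  have fpos: "\<forall>x\<in>#MF. x > 0" using t1 by (auto simp: MF_def fv_def)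
  have filt: "{#x \<in># MF. x > 0#} = {#x \<in># MG. x > 0#}"
  proof (rule multiset_eqI)
    fix x
    show "count {#x \<in># MF. x > 0#} x = count {#x \<in># MG. x > 0#} x"
      using cnt[of x t] by (simp add: MF_def MG_def cnt_img fv_def gv_def)
  qed
  have MF1: "{#x \<in># MF. x > 0#} = MF" using fpos by (simp add: filter_mset_eq_conv)
  have "size MG = size MF" by (simp add: MF_def MG_def)
  moreover have "size MG = size {#x \<in># MG. x > 0#} + size {#x \<in># MG. \<not> x > 0#}"
    by (metis multiset_partition size_union)
  ultimately have "size {#x \<in># MG. \<not> x > 0#} = 0" using filt MF1 by simp
  then have "MG = {#x \<in># MG. x > 0#}"
    using multiset_partition[of MG "\<lambda>x. x > 0"] by (metis size_eq_0_iff_empty add.right_neutral)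
  then have eq: "image_mset gv (mset_set {1..q}) = image_mset fv (mset_set {1..q})"
    using filt MF1 by (simp add: MG_def MF_def)
  obtain \<sigma> where s: "\<sigma> permutes {1..q}" and s2: "\<forall>x\<in>{1..q}. gv x = fv (\<sigma> x)"
    using image_mset_eq_implies_permutes[OF _ eq] by auto
  have pm: "G j = F (\<sigma> j) \<or> G j = - F (\<sigma> j)" if j: "j \<in> {1..q}" for j
  proof -
    have sj: "\<sigma> j \<in> {1..q}" using s j by (metis permutes_in_image)
    show ?thesis using t2 s2 j sj by (auto simp: gv_def fv_def)
  qed
  define \<epsilon> where "\<epsilon> j = (if G j = F (\<sigma> j) then 1 else -1::real)" for j
  show ?thesis
  proof (intro exI[of _ \<sigma>] exI[of _ \<epsilon>] conjI s ballI allI)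
    fix j show "\<epsilon> j \<in> {-1, 1}" by (simp add: \<epsilon>_def)
  next
    fix j assume j: "j \<in> {1..q}"
    show "G j = \<epsilon> j *\<^sub>R F (\<sigma> j)" using pm[OF j] by (auto simp: \<epsilon>_def)
  qed
qed


lemma rho_cadd: "rho q \<mu> t (cadd a b) = cadd (rho q \<mu> t a) (rho q \<mu> t b)"
  by (auto simp: rho_def cadd_def fun_eq_iff algebra_simps)
lemma rho_cscale: "rho q \<mu> t (cscale c a) = cscale c (rho q \<mu> t a)"
  by (auto simp: rho_def cscale_def fun_eq_iff algebra_simps)
lemma rho_cdiff: "rho q \<mu> t (cdiff a b) = cdiff (rho q \<mu> t a) (rho q \<mu> t b)"
  by (auto simp: rho_def cdiff_def fun_eq_iff algebra_simps)
lemma rho_t0[simp]: "rho q \<mu> (0, 0) a = (\<lambda>j. 0)"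
  by (auto simp: rho_def dual_ap_def fun_eq_iff)
lemma rho_zero[simp]: "rho q \<mu> t (\<lambda>j. 0) = (\<lambda>j. 0)"
  by (auto simp: rho_def fun_eq_iff)
lemma rho_tadd: "rho q \<mu> (t + t') a = cadd (rho q \<mu> t a) (rho q \<mu> t' a)"
  by (auto simp: rho_def cadd_def fun_eq_iff dual_ap_def algebra_simps)
lemma rho_tscale: "rho q \<mu> (c *\<^sub>R t) a = cscale c (rho q \<mu> t a)"
  by (auto simp: rho_def cscale_def fun_eq_iff dual_ap_def algebra_simps)
lemma cdiff_zero[simp]: "cdiff a (\<lambda>j. 0) = a" by (simp add: cdiff_def)

lemma einner_cadd1: "einner q (cadd a b) c = einner q a c + einner q b c"
  by (simp add: einner_def cadd_def sum.distrib algebra_simps)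
lemma einner_cadd2: "einner q c (cadd a b) = einner q c a + einner q c b"
  by (simp add: einner_def cadd_def sum.distrib algebra_simps)
lemma einner_cscale1: "einner q (cscale r a) c = r * einner q a c"
  by (simp add: einner_def cscale_def sum_distrib_left algebra_simps)
lemma einner_cscale2: "einner q c (cscale r a) = r * einner q c a"
  by (simp add: einner_def cscale_def sum_distrib_left algebra_simps)
lemma einner_cdiff1: "einner q (cdiff a b) c = einner q a c - einner q b c"
  by (simp add: einner_def cdiff_def sum_subtractf algebra_simps)
lemma einner_cdiff2: "einner q c (cdiff a b) = einner q c a - einner q c b"
  by (simp add: einner_def cdiff_def sum_subtractf algebra_simps)

lemma omega_cadd2: "omega q \<mu> a (cadd b c) = omega q \<mu> a b + omega q \<mu> a c"
  by (simp add: omega_def einner_cadd2)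
lemma omega_cscale2: "omega q \<mu> a (cscale r b) = r *\<^sub>R omega q \<mu> a b"
  by (simp add: omega_def einner_cscale2)

lemma car_osc2: "(z, a, t) \<in> car (osc2 q \<mu>) \<longleftrightarrow> (\<forall>j. (j = 0 \<or> j > q) \<longrightarrow> a j = 0)"
  by (simp add: osc2_def)
lemma brk_osc2: "brk (osc2 q \<mu>) (z, a, t) (z', a', t') = (omega q \<mu> a a', cdiff (rho q \<mu> t a') (rho q \<mu> t' a), (0, 0))"
  by (simp add: osc2_def)
lemma vadd_osc2: "vadd (osc2 q \<mu>) (z, a, t) (z', a', t') = (z + z', cadd a a', t + t')"
  by (simp add: osc2_def)
lemma vscale_osc2: "vscale (osc2 q \<mu>) c (z, a, t) = (c *\<^sub>R z, cscale c a, c *\<^sub>R t)"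
  by (simp add: osc2_def)

lemma closed_osc2: "closed_mla (osc2 q \<mu>)"
  unfolding closed_mla_def
  by (auto simp: osc2_def cadd_def cscale_def cdiff_def rho_def)

definition Jset :: "nat \<Rightarrow> (nat \<Rightarrow> real \<times> real) \<Rightarrow> real \<times> real \<Rightarrow> real \<Rightarrow> nat set" where
  "Jset q \<mu> t l = {j\<in>{1..q}. (dual_ap (\<mu> j) t)\<^sup>2 = l}"

lemma Jset_fin: "finite (Jset q \<mu> t l)" by (simp add: Jset_def)

lemma rho_rho_SJ:
  assumes "a \<in> SJ (Jset q \<mu> t l)"
  shows "rho q \<mu> t (rho q \<mu> t a) = cscale (- l) a"
proof
  fix j
  show "rho q \<mu> t (rho q \<mu> t a) j = cscale (- l) a j"
  proof (cases "j \<in> Jset q \<mu> t l")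
    case True
    then have "(dual_ap (\<mu> j) t)\<^sup>2 = l" "1 \<le> j \<and> j \<le> q" by (auto simp: Jset_def)
    then show ?thesis
      by (simp add: rho_def cscale_def power2_eq_square algebra_simps flip: of_real_mult)
  next
    case False
    then have "a j = 0" using assms by (simp add: SJ_def)
    then show ?thesis by (simp add: rho_def cscale_def)
  qed
qed

lemma rho_rho_eig:
  assumes "\<And>j. j = 0 \<or> j > q \<Longrightarrow> a' j = 0"
    and "rho q \<mu> t (rho q \<mu> t a') = cscale (- l) a'"
  shows "a' \<in> SJ (Jset q \<mu> t l)"
  unfolding SJ_def
proof (intro CollectI allI impI)
  fix j assume j: "j \<notin> Jset q \<mu> t l"
  show "a' j = 0"
  proof (cases "1 \<le> j \<and> j \<le> q")
    case True
    then have ne: "(dual_ap (\<mu> j) t)\<^sup>2 \<noteq> l" using j by (simp add: Jset_def)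
    have "rho q \<mu> t (rho q \<mu> t a') j = cscale (- l) a' j" using assms(2) by simp
    then have "- (complex_of_real ((dual_ap (\<mu> j) t)\<^sup>2)) * a' j = - complex_of_real l * a' j"
      using True by (simp add: rho_def cscale_def power2_eq_square algebra_simps)
    then have "(complex_of_real ((dual_ap (\<mu> j) t)\<^sup>2) - complex_of_real l) * a' j = 0"
      by (simp add: algebra_simps)
    moreover have "complex_of_real ((dual_ap (\<mu> j) t)\<^sup>2) - complex_of_real l \<noteq> 0"
      using ne by (metis of_real_eq_iff right_minus_eq)
    ultimately show ?thesis by simp
  next
    case False
    then show ?thesis using assms(1) by auto
  qed
qed


lemma osc2_kern_in:
  assumes l: "l > 0" and a': "a' \<in> SJ (Jset q \<mu> t l)"
  shows "((-1/l) *\<^sub>R omega q \<mu> a (rho q \<mu> t a'), a', (0::real, 0::real)) \<in> KS (osc2 q \<mu>) (z, a, t) (- l)"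
proof -
  have c: "((-1/l) *\<^sub>R omega q \<mu> a (rho q \<mu> t a'), a', (0::real, 0::real)) \<in> car (osc2 q \<mu>)"
    using a' by (auto simp: car_osc2 SJ_def Jset_def)
  show ?thesis unfolding KS_def
    using c l rho_rho_SJ[OF a'] by (simp add: brk_osc2 vscale_osc2 zero_prod_def)
qed

lemma osc2_kern_out:
  assumes l: "l > 0" and Y: "Y \<in> KS (osc2 q \<mu>) (z, a, t) (- l)"
  shows "fst (snd Y) \<in> SJ (Jset q \<mu> t l) \<and> snd (snd Y) = (0, 0) \<and>
         fst Y = (-1/l) *\<^sub>R omega q \<mu> a (rho q \<mu> t (fst (snd Y)))"
proof -
  obtain z' a' t' where Yd: "Y = (z', a', t')" by (cases Y) auto
  have c: "\<And>j. j = 0 \<or> j > q \<Longrightarrow> a' j = 0" using Y by (auto simp: KS_def Yd car_osc2)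
  have e: "brk (osc2 q \<mu>) (z, a, t) (brk (osc2 q \<mu>) (z, a, t) Y) = vscale (osc2 q \<mu>) (- l) Y"
    using Y by (simp add: KS_def)
  then have "(0, 0) = - (l *\<^sub>R t')" by (simp add: Yd brk_osc2 vscale_osc2)
  then have "l *\<^sub>R t' = 0" by (metis neg_equal_0_iff_equal zero_prod_def)
  then have t0: "t' = (0, 0)" using l by (metis less_irrefl scaleR_eq_0_iff zero_prod_def)
  then have e2: "rho q \<mu> t (rho q \<mu> t a') = cscale (- l) a'"
    using e by (simp add: Yd brk_osc2 vscale_osc2)
  have e3: "omega q \<mu> a (rho q \<mu> t a') = (- l) *\<^sub>R z'"
    using e t0 by (simp add: Yd brk_osc2 vscale_osc2)
  have "z' = (-1/l) *\<^sub>R omega q \<mu> a (rho q \<mu> t a')" using e3 l by simp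
  then show ?thesis using rho_rho_eig[OF c e2] t0 by (simp add: Yd)
qed

lemma osc2_count_le:
  assumes f: "lie_iso (osc2 q \<mu>) (osc2 q \<mu>') f" and X: "(z, a, t) \<in> car (osc2 q \<mu>)"
    and fX: "f (z, a, t) = (z2, a2, t2)" and l: "l > 0"
  shows "card (Jset q \<mu> t l) \<le> card (Jset q \<mu>' t2 l)"
proof (rule dim_transfer[OF f closed_osc2 X Jset_fin Jset_fin,
      where k = "- l" and r = "\<lambda>a'. ((-1/l) *\<^sub>R omega q \<mu> a (rho q \<mu> t a'), a', (0, 0))"
      and p = "\<lambda>Y. fst (snd Y)"])
  fix a' assume "a' \<in> SJ (Jset q \<mu> t l)"
  then show "((-1/l) *\<^sub>R omega q \<mu> a (rho q \<mu> t a'), a', (0, 0)) \<in> KS (osc2 q \<mu>) (z, a, t) (- l)"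
    using osc2_kern_in[OF l] by blast
next
  fix a1 b1
  show "((-1/l) *\<^sub>R omega q \<mu> a (rho q \<mu> t (cadd a1 b1)), cadd a1 b1, (0, 0)) =
    vadd (osc2 q \<mu>) ((-1/l) *\<^sub>R omega q \<mu> a (rho q \<mu> t a1), a1, (0, 0))
      ((-1/l) *\<^sub>R omega q \<mu> a (rho q \<mu> t b1), b1, (0, 0))"
    by (simp add: vadd_osc2 rho_cadd omega_cadd2 scaleR_add_right)
next
  fix c a1
  show "((-1/l) *\<^sub>R omega q \<mu> a (rho q \<mu> t (cscale c a1)), cscale c a1, (0, 0)) =
    vscale (osc2 q \<mu>) c ((-1/l) *\<^sub>R omega q \<mu> a (rho q \<mu> t a1), a1, (0, 0))"
    by (simp add: vscale_osc2 rho_cscale omega_cscale2 zero_prod_def)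
next
  show "inj_on (\<lambda>a'. ((-1/l) *\<^sub>R omega q \<mu> a (rho q \<mu> t a'), a', (0::real, 0::real))) (SJ (Jset q \<mu> t l))"
    by (auto simp: inj_on_def)
next
  fix Y assume "Y \<in> KS (osc2 q \<mu>') (f (z, a, t)) (- l)"
  then show "fst (snd Y) \<in> SJ (Jset q \<mu>' t2 l)" using osc2_kern_out[OF l] fX by fastforce
next
  show "inj_on (\<lambda>Y. fst (snd Y)) (KS (osc2 q \<mu>') (f (z, a, t)) (- l))"
  proof (rule inj_onI)
    fix Y Z assume "Y \<in> KS (osc2 q \<mu>') (f (z, a, t)) (- l)" "Z \<in> KS (osc2 q \<mu>') (f (z, a, t)) (- l)"
      "fst (snd Y) = fst (snd Z)"
    then show "Y = Z" using osc2_kern_out[OF l, of Y q \<mu>' z2 a2 t2] osc2_kern_out[OF l, of Z q \<mu>' z2 a2 t2] fX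
      by (metis prod.collapse)
  qed
next
  fix Y Z :: "(real \<times> real) \<times> (nat \<Rightarrow> complex) \<times> real \<times> real"
  show "fst (snd (vadd (osc2 q \<mu>') Y Z)) = cadd (fst (snd Y)) (fst (snd Z))"
    by (cases Y; cases Z) (simp add: vadd_osc2)
next
  fix c and Y :: "(real \<times> real) \<times> (nat \<Rightarrow> complex) \<times> real \<times> real"
  show "fst (snd (vscale (osc2 q \<mu>') c Y)) = cscale c (fst (snd Y))"
    by (cases Y) (simp add: vscale_osc2)
qed

lemma osc2_count_eq:
  assumes f: "lie_iso (osc2 q \<mu>) (osc2 q \<mu>') f" and X: "(z, a, t) \<in> car (osc2 q \<mu>)"
    and fX: "f (z, a, t) = (z2, a2, t2)" and l: "l > 0"
  shows "card (Jset q \<mu> t l) = card (Jset q \<mu>' t2 l)"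
proof -
  have g: "lie_iso (osc2 q \<mu>') (osc2 q \<mu>) (inv_into (car (osc2 q \<mu>)) f)"
    by (rule lie_iso_inv[OF f closed_osc2])
  have fc: "(z2, a2, t2) \<in> car (osc2 q \<mu>')" using f X fX by (metis lie_iso_def bij_betwE)
  have gX: "inv_into (car (osc2 q \<mu>)) f (z2, a2, t2) = (z, a, t)"
    using lie_iso_inv_app[OF f X] fX by simp
  show ?thesis using osc2_count_le[OF f X fX l] osc2_count_le[OF g fc gX l] by simp
qed


definition lmap :: "real \<times> real \<Rightarrow> real \<times> real \<Rightarrow> real \<times> real \<Rightarrow> real \<times> real" where
  "lmap a1 a2 t = fst t *\<^sub>R a1 + snd t *\<^sub>R a2"

definition det2 :: "real \<times> real \<Rightarrow> real \<times> real \<Rightarrow> real" where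
  "det2 a1 a2 = fst a1 * snd a2 - snd a1 * fst a2"

definition perp :: "real \<times> real \<Rightarrow> real \<times> real" where
  "perp w = (- snd w, fst w)"

lemma dual_ap_lmap: "dual_ap u (lmap a1 a2 t) = dual_ap (dual_ap u a1, dual_ap u a2) t"
  by (simp add: dual_ap_def lmap_def algebra_simps)

lemma perp_nz: "w \<noteq> 0 \<Longrightarrow> perp w \<noteq> 0"
  by (cases w) (auto simp: perp_def zero_prod_def)

lemma perp_zero: "dual_ap (perp w) w = 0" by (simp add: perp_def dual_ap_def)

lemma ortho_par:
  assumes "w \<noteq> 0" and "dual_ap u w = 0"
  shows "\<exists>c. u = c *\<^sub>R perp w"
proof (cases "fst w = 0")
  case True
  then have "snd w \<noteq> 0" using assms(1) by (cases w) (auto simp: zero_prod_def)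
  then show ?thesis using assms(2) True
    by (intro exI[of _ "- fst u / snd w"]) (cases u, auto simp: perp_def dual_ap_def field_simps)
next
  case False
  then show ?thesis using assms(2)
    by (intro exI[of _ "snd u / fst w"]) (cases u, auto simp: perp_def dual_ap_def field_simps)
qed

lemma ortho_par2:
  assumes "w \<noteq> 0" and "dual_ap (perp w) x = 0"
  shows "\<exists>c. x = c *\<^sub>R w"
proof -
  have "dual_ap x (perp w) = 0" using assms(2) by (simp add: dual_ap_def mult.commute)
  then obtain c where "x = c *\<^sub>R perp (perp w)" using ortho_par[OF perp_nz[OF assms(1)]] by blast
  then have "x = (- c) *\<^sub>R w" by (cases w) (simp add: perp_def)
  then show ?thesis by blast
qed

lemma kernel_vec:
  assumes "det2 a1 a2 = 0"
  shows "\<exists>w. w \<noteq> 0 \<and> lmap a1 a2 w = 0"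
proof -
  obtain a11 a12 a21 a22 where a: "a1 = (a11, a12)" "a2 = (a21, a22)" by (cases a1, cases a2) auto
  have d: "a11 * a22 - a12 * a21 = 0" using assms a by (simp add: det2_def)
  show ?thesis
  proof (cases "a21 \<noteq> 0 \<or> a11 \<noteq> 0")
    case True
    then show ?thesis using d a
      by (intro exI[of _ "(a21, - a11)"]) (auto simp: lmap_def zero_prod_def algebra_simps)
  next
    case F1: False
    show ?thesis
    proof (cases "a22 \<noteq> 0 \<or> a12 \<noteq> 0")
      case True
      then show ?thesis using d a F1
        by (intro exI[of _ "(a22, - a12)"]) (auto simp: lmap_def zero_prod_def algebra_simps)
    next
      case False
      then show ?thesis using a F1
        by (intro exI[of _ "(1, 0)"]) (auto simp: lmap_def zero_prod_def)
    qed
  qed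
qed

lemma functional_kernel:
  fixes l :: "real \<times> real"
  shows "\<exists>w. w \<noteq> 0 \<and> dual_ap l w = 0"
proof (cases "l = 0")
  case True then show ?thesis by (intro exI[of _ "(1,0)"]) (simp add: dual_ap_def zero_prod_def)
next
  case False then show ?thesis
    by (intro exI[of _ "perp l"]) (simp add: perp_nz, simp add: dual_ap_def perp_def algebra_simps)
qed

lemma match_functional:
  fixes h k :: "real \<times> real"
  assumes h: "h \<noteq> 0" and k: "k \<noteq> 0"
  shows "\<exists>b1 b2. det2 b1 b2 \<noteq> 0 \<and> (\<forall>t. dual_ap h (lmap b1 b2 t) = dual_ap k t)"
proof -
  obtain h1 h2 k1 k2 where hk: "h = (h1, h2)" "k = (k1, k2)" by (cases h, cases k) auto
  define N where "N = h1\<^sup>2 + h2\<^sup>2"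
  have N: "N > 0" using h hk by (auto simp: N_def zero_prod_def sum_power2_gt_zero_iff)
  define p where "p = (k1 * h1 + k2 * h2) / N"
  define r where "r = (k2 * h1 - k1 * h2) / N"
  have e1: "h1 * p - h2 * r = k1"
  proof -
    have "h1 * p - h2 * r = (h1 * (k1 * h1 + k2 * h2) - h2 * (k2 * h1 - k1 * h2)) / N"
      using N by (simp add: p_def r_def field_simps)
    also have "\<dots> = k1 * N / N" by (simp add: N_def power2_eq_square algebra_simps)
    finally show ?thesis using N by simp
  qed
  have e2: "h1 * r + h2 * p = k2"
  proof -
    have "h1 * r + h2 * p = (h1 * (k2 * h1 - k1 * h2) + h2 * (k1 * h1 + k2 * h2)) / N"
      using N by (simp add: p_def r_def field_simps)
    also have "\<dots> = k2 * N / N" by (simp add: N_def power2_eq_square algebra_simps)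
    finally show ?thesis using N by simp
  qed
  have pr: "p \<noteq> 0 \<or> r \<noteq> 0"
  proof (rule ccontr)
    assume "\<not> (p \<noteq> 0 \<or> r \<noteq> 0)"
    then have "k1 = 0" "k2 = 0" using e1 e2 by auto
    then show False using k hk by (simp add: zero_prod_def)
  qed
  have det: "det2 (p, - r) (r, p) \<noteq> 0"
  proof -
    have "p * p + r * r > 0" using pr by (simp add: sum_squares_gt_zero_iff)
    then show ?thesis by (auto simp: det2_def)
  qed
  have "\<forall>t. dual_ap h (lmap (p, - r) (r, p) t) = dual_ap k t"
  proof
    fix t :: "real \<times> real"
    have "dual_ap h (lmap (p, - r) (r, p) t) = fst t * (h1 * p - h2 * r) + snd t * (h1 * r + h2 * p)"
      by (simp add: hk dual_ap_def lmap_def algebra_simps)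
    then show "dual_ap h (lmap (p, - r) (r, p) t) = dual_ap k t"
      using e1 e2 by (simp add: hk dual_ap_def mult.commute)
  qed
  then show ?thesis using det by blast
qed

lemma fix_inv:
  fixes F G :: "nat \<Rightarrow> real \<times> real"
  assumes Fnz: "\<forall>j\<in>{1..q}. F j \<noteq> 0" and Gnz: "\<forall>j\<in>{1..q}. G j \<noteq> 0"
    and Q: "\<forall>j\<in>{1..q}. \<forall>t. dual_ap (G j) (lmap a1 a2 t) = dual_ap (F j) t"
    and H2: "\<And>w. w \<noteq> 0 \<Longrightarrow> \<forall>j\<in>{1..q}. dual_ap (F j) w = 0 \<Longrightarrow> \<exists>w'. w' \<noteq> 0 \<and> (\<forall>j\<in>{1..q}. dual_ap (G j) w' = 0)"
  shows "\<exists>b1 b2. det2 b1 b2 \<noteq> 0 \<and> (\<forall>j\<in>{1..q}. \<forall>t. dual_ap (G j) (lmap b1 b2 t) = dual_ap (F j) t)"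
proof (cases "det2 a1 a2 \<noteq> 0")
  case True then show ?thesis using Q by blast
next
  case False
  show ?thesis
  proof (cases "q = 0")
    case True
    then show ?thesis by (intro exI[of _ "(1,0)"] exI[of _ "(0,1)"]) (simp add: det2_def)
  next
    case q: False
    obtain w where w: "w \<noteq> 0" "lmap a1 a2 w = 0" using kernel_vec False by blast
    have "\<forall>j\<in>{1..q}. dual_ap (F j) w = 0"
    proof
      fix j assume j: "j \<in> {1..q}"
      have "dual_ap (F j) w = dual_ap (G j) (lmap a1 a2 w)" using Q[rule_format, OF j] by simp
      also have "\<dots> = 0" using w(2) by (simp add: dual_ap_def)
      finally show "dual_ap (F j) w = 0" .
    qed
    then obtain w' where w': "w' \<noteq> 0" "\<forall>j\<in>{1..q}. dual_ap (G j) w' = 0" using H2 w by blast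
    define h where "h = perp w'"
    have Gd: "\<exists>d. G j = d *\<^sub>R h" if "j \<in> {1..q}" for j
      unfolding h_def by (rule ortho_par[OF w'(1)]) (use w'(2) that in simp)
    define k where "k = (dual_ap h a1, dual_ap h a2)"
    have hQ: "dual_ap h (lmap a1 a2 t) = dual_ap k t" for t by (simp add: k_def dual_ap_lmap)
    have j1: "1 \<in> {1..q}" using q by simp
    obtain d1 where d1: "G 1 = d1 *\<^sub>R h" using Gd[OF j1] by blast
    have hnz: "h \<noteq> 0" using perp_nz[OF w'(1)] h_def by simp
    have knz: "k \<noteq> 0"
    proof
      assume k0: "k = 0"
      have "dual_ap (F 1) t = 0" for t
      proof -
        have "dual_ap (F 1) t = dual_ap (G 1) (lmap a1 a2 t)" using Q[rule_format, OF j1] by simp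
        also have "\<dots> = d1 * dual_ap h (lmap a1 a2 t)" using d1 by (simp add: dual_ap_scale)
        also have "\<dots> = d1 * dual_ap k t" using hQ by simp
        also have "\<dots> = 0" using k0 by (simp add: dual_ap_def)
        finally show ?thesis .
      qed
      from this[of "(1,0)"] this[of "(0,1)"] have "F 1 = 0"
        by (cases "F 1") (simp add: dual_ap_def zero_prod_def)
      then show False using Fnz j1 by blast
    qed
    obtain b1 b2 where b: "det2 b1 b2 \<noteq> 0" "\<forall>t. dual_ap h (lmap b1 b2 t) = dual_ap k t"
      using match_functional[OF hnz knz] by blast
    have "\<forall>j\<in>{1..q}. \<forall>t. dual_ap (G j) (lmap b1 b2 t) = dual_ap (F j) t"
    proof (intro ballI allI)
      fix j t assume j: "j \<in> {1..q}"
      obtain d where d: "G j = d *\<^sub>R h" using Gd[OF j] by blast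
      have "dual_ap (G j) (lmap b1 b2 t) = d * dual_ap k t" using b(2)[rule_format, of t] d by (simp add: dual_ap_scale)
      also have "\<dots> = dual_ap (G j) (lmap a1 a2 t)" using d hQ by (simp add: dual_ap_scale)
      also have "\<dots> = dual_ap (F j) t" using Q[rule_format, OF j] by simp
      finally show "dual_ap (G j) (lmap b1 b2 t) = dual_ap (F j) t" .
    qed
    then show ?thesis using b by blast
  qed
qed

lemma rank_lemma:
  fixes M N :: "nat \<Rightarrow> real \<times> real"
  assumes MN: "\<forall>j\<in>{1..q}. \<forall>t. dual_ap (M j) (lmap c1 c2 t) = e j * dual_ap (N (\<tau> j)) t"
    and e: "\<forall>j\<in>{1..q}. e j \<noteq> 0" and tau: "\<tau> permutes {1..q}"
    and w: "w \<noteq> 0" "\<forall>j\<in>{1..q}. dual_ap (M j) w = 0"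
  shows "\<exists>w'. w' \<noteq> 0 \<and> (\<forall>k\<in>{1..q}. dual_ap (N k) w' = 0)"
proof -
  obtain w' where w': "w' \<noteq> 0" "dual_ap (dual_ap (perp w) c1, dual_ap (perp w) c2) w' = 0"
    using functional_kernel[of "(dual_ap (perp w) c1, dual_ap (perp w) c2)"] by (elim exE conjE)
  have "dual_ap (perp w) (lmap c1 c2 w') = 0" using w'(2) by (simp only: dual_ap_lmap)
  then obtain c where c: "lmap c1 c2 w' = c *\<^sub>R w" using ortho_par2[OF w(1)] by blast
  have "\<forall>k\<in>{1..q}. dual_ap (N k) w' = 0"
  proof
    fix k assume k: "k \<in> {1..q}"
    have "k \<in> \<tau> ` {1..q}" using permutes_image[OF tau] k by simp
    then obtain j where j: "j \<in> {1..q}" "\<tau> j = k" by (elim imageE) simp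
    have "e j * dual_ap (N k) w' = dual_ap (M j) (lmap c1 c2 w')"
      using MN[rule_format, OF j(1), of w'] j(2) by simp
    also have "\<dots> = c * dual_ap (M j) w" unfolding c by (simp add: dual_ap_def algebra_simps)
    also have "\<dots> = 0" using w(2)[rule_format, OF j(1)] by simp
    finally have "e j * dual_ap (N k) w' = 0" .
    moreover have "e j \<noteq> 0" using e j(1) by simp
    ultimately show "dual_ap (N k) w' = 0" by simp
  qed
  then show ?thesis using w'(1) by blast
qed


lemma cscale_zero[simp]: "cscale c (\<lambda>j. 0) = (\<lambda>j. 0)" by (simp add: cscale_def)
lemma cadd_zero[simp]: "cadd (\<lambda>j. 0) (\<lambda>j. 0) = (\<lambda>j. 0)" by (simp add: cadd_def)

lemma osc2_T_lin:
  assumes f: "lie_iso (osc2 q \<mu>) (osc2 q \<mu>') f"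
  shows "snd (snd (f ((0,0), (\<lambda>j. 0), t))) =
     lmap (snd (snd (f ((0,0), (\<lambda>j. 0), (1,0))))) (snd (snd (f ((0,0), (\<lambda>j. 0), (0,1))))) t"
proof -
  define E1 where "E1 = ((0::real,0::real), (\<lambda>j::nat. 0::complex), (1::real,0::real))"
  define E2 where "E2 = ((0::real,0::real), (\<lambda>j::nat. 0::complex), (0::real,1::real))"
  have c1: "E1 \<in> car (osc2 q \<mu>)" "E2 \<in> car (osc2 q \<mu>)" by (auto simp: E1_def E2_def car_osc2)
  have s1: "vscale (osc2 q \<mu>) (fst t) E1 \<in> car (osc2 q \<mu>)" "vscale (osc2 q \<mu>) (snd t) E2 \<in> car (osc2 q \<mu>)"
    by (auto simp: E1_def E2_def car_osc2 vscale_osc2)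
  have eq: "((0,0), (\<lambda>j. 0), t) = vadd (osc2 q \<mu>) (vscale (osc2 q \<mu>) (fst t) E1) (vscale (osc2 q \<mu>) (snd t) E2)"
    by (cases t) (simp add: E1_def E2_def vadd_osc2 vscale_osc2 zero_prod_def)
  have "f ((0,0), (\<lambda>j. 0), t) = vadd (osc2 q \<mu>') (vscale (osc2 q \<mu>') (fst t) (f E1)) (vscale (osc2 q \<mu>') (snd t) (f E2))"
    using f s1 c1 by (simp add: eq lie_iso_def)
  then show ?thesis
    by (cases "f E1"; cases "f E2") (simp add: vadd_osc2 vscale_osc2 lmap_def E1_def E2_def)
qed

lemma osc2_data:
  assumes f: "lie_iso (osc2 q \<mu>) (osc2 q \<mu>') f" and \<mu>nz: "\<forall>j\<in>{1..q}. \<mu> j \<noteq> 0"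
  shows "\<exists>\<sigma> \<epsilon> a1 a2. \<sigma> permutes {1..q} \<and> (\<forall>j. \<epsilon> j \<in> {-1, 1::real}) \<and>
     (\<forall>j\<in>{1..q}. \<forall>t. dual_ap (\<mu>' j) (lmap a1 a2 t) = \<epsilon> j * dual_ap (\<mu> (\<sigma> j)) t)"
proof -
  define a1 where "a1 = snd (snd (f ((0,0), (\<lambda>j. 0), (1,0))))"
  define a2 where "a2 = snd (snd (f ((0,0), (\<lambda>j. 0), (0,1))))"
  define G where "G j = (dual_ap (\<mu>' j) a1, dual_ap (\<mu>' j) a2)" for j
  have GT: "dual_ap (G j) t = dual_ap (\<mu>' j) (lmap a1 a2 t)" for j t
    by (simp add: G_def dual_ap_lmap)
  have cnt: "card {j\<in>{1..q}. (dual_ap (\<mu> j) t)\<^sup>2 = l} = card {j\<in>{1..q}. (dual_ap (G j) t)\<^sup>2 = l}"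
    if l: "l > 0" for t l
  proof -
    have X: "((0,0), (\<lambda>j. 0), t) \<in> car (osc2 q \<mu>)" by (simp add: car_osc2)
    have fX: "f ((0,0), (\<lambda>j. 0), t) = (fst (f ((0,0), (\<lambda>j. 0), t)), fst (snd (f ((0,0), (\<lambda>j. 0), t))),
               lmap a1 a2 t)"
      using osc2_T_lin[OF f, of t] unfolding a1_def a2_def by (metis prod.collapse)
    show ?thesis using osc2_count_eq[OF f X fX l] by (simp add: Jset_def GT)
  qed
  obtain \<sigma> \<epsilon> where s: "\<sigma> permutes {1..q}" "\<forall>j. \<epsilon> j \<in> {-1, 1::real}" "\<forall>j\<in>{1..q}. G j = \<epsilon> j *\<^sub>R \<mu> (\<sigma> j)"
    using forms_match[OF \<mu>nz cnt] by blast
  have "\<forall>j\<in>{1..q}. \<forall>t. dual_ap (\<mu>' j) (lmap a1 a2 t) = \<epsilon> j * dual_ap (\<mu> (\<sigma> j)) t"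
    using s(3) by (simp add: GT[symmetric] dual_ap_scale)
  then show ?thesis using s(1,2) by blast
qed



definition Cmap :: "nat \<Rightarrow> (nat \<Rightarrow> nat) \<Rightarrow> (nat \<Rightarrow> real) \<Rightarrow> (nat \<Rightarrow> complex) \<Rightarrow> nat \<Rightarrow> complex" where
  "Cmap q \<sigma> \<epsilon> a = (\<lambda>j. if 1 \<le> j \<and> j \<le> q then (if \<epsilon> j = 1 then a (\<sigma> j) else cnj (a (\<sigma> j))) else 0)"

definition Cinv :: "nat \<Rightarrow> (nat \<Rightarrow> nat) \<Rightarrow> (nat \<Rightarrow> real) \<Rightarrow> (nat \<Rightarrow> complex) \<Rightarrow> nat \<Rightarrow> complex" where
  "Cinv q \<sigma> \<epsilon> a = (\<lambda>k. if 1 \<le> k \<and> k \<le> q then (if \<epsilon> (inv \<sigma> k) = 1 then a (inv \<sigma> k) else cnj (a (inv \<sigma> k))) else 0)"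

lemma Cmap_cadd: "Cmap q \<sigma> \<epsilon> (cadd a b) = cadd (Cmap q \<sigma> \<epsilon> a) (Cmap q \<sigma> \<epsilon> b)"
  by (auto simp: Cmap_def cadd_def fun_eq_iff)
lemma Cmap_cscale: "Cmap q \<sigma> \<epsilon> (cscale c a) = cscale c (Cmap q \<sigma> \<epsilon> a)"
  by (auto simp: Cmap_def cscale_def fun_eq_iff)
lemma Cmap_cdiff: "Cmap q \<sigma> \<epsilon> (cdiff a b) = cdiff (Cmap q \<sigma> \<epsilon> a) (Cmap q \<sigma> \<epsilon> b)"
  by (auto simp: Cmap_def cdiff_def fun_eq_iff)

lemma Cmap_einner:
  assumes s: "\<sigma> permutes {1..q}"
  shows "einner q (Cmap q \<sigma> \<epsilon> a) (Cmap q \<sigma> \<epsilon> b) = einner q a b"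
proof -
  define g where "g k = Re (a k * cnj (b k))" for k
  have "einner q (Cmap q \<sigma> \<epsilon> a) (Cmap q \<sigma> \<epsilon> b) = (\<Sum>j=1..q. g (\<sigma> j))"
    unfolding einner_def
  proof (rule sum.cong)
    fix j assume "j \<in> {1..q}"
    then show "Re (Cmap q \<sigma> \<epsilon> a j * cnj (Cmap q \<sigma> \<epsilon> b j)) = g (\<sigma> j)"
      by (auto simp: Cmap_def g_def)
  qed simp
  also have "\<dots> = (\<Sum>j=1..q. g j)" using sum.permute[OF s, of g] by (simp add: comp_def)
  finally show ?thesis by (simp add: einner_def g_def)
qed

lemma Cmap_rho:
  assumes s: "\<sigma> permutes {1..q}" and e: "\<forall>j. \<epsilon> j \<in> {-1, 1}"
    and r: "\<forall>j\<in>{1..q}. dual_ap (\<mu>' j) t' = \<epsilon> j * dual_ap (\<mu> (\<sigma> j)) t"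
  shows "Cmap q \<sigma> \<epsilon> (rho q \<mu> t a) = rho q \<mu>' t' (Cmap q \<sigma> \<epsilon> a)"
proof
  fix j
  show "Cmap q \<sigma> \<epsilon> (rho q \<mu> t a) j = rho q \<mu>' t' (Cmap q \<sigma> \<epsilon> a) j"
  proof (cases "1 \<le> j \<and> j \<le> q")
    case True
    then have sj: "1 \<le> \<sigma> j \<and> \<sigma> j \<le> q" using permutes_in_image[OF s, of j] by simp
    have rj: "dual_ap (\<mu>' j) t' = \<epsilon> j * dual_ap (\<mu> (\<sigma> j)) t" using r True by simp
    show ?thesis
    proof (cases "\<epsilon> j = 1")
      case True
      then show ?thesis using \<open>1 \<le> j \<and> j \<le> q\<close> sj rj by (simp add: Cmap_def rho_def)
    next
      case False
      then have "\<epsilon> j = -1" using e by auto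
      then show ?thesis using \<open>1 \<le> j \<and> j \<le> q\<close> sj rj by (simp add: Cmap_def rho_def)
    qed
  next
    case False
    then show ?thesis by (auto simp: Cmap_def rho_def)
  qed
qed

lemma Cmap_inj:
  assumes s: "\<sigma> permutes {1..q}" and e: "\<forall>j. \<epsilon> j \<in> {-1, 1}"
    and a: "\<And>j. j = 0 \<or> j > q \<Longrightarrow> a j = 0" and b: "\<And>j. j = 0 \<or> j > q \<Longrightarrow> b j = 0"
    and eq: "Cmap q \<sigma> \<epsilon> a = Cmap q \<sigma> \<epsilon> b"
  shows "a = b"
proof
  fix k
  show "a k = b k"
  proof (cases "1 \<le> k \<and> k \<le> q")
    case True
    have "k \<in> \<sigma> ` {1..q}" using permutes_image[OF s] True by simp
    then obtain j where j: "j \<in> {1..q}" "\<sigma> j = k" by (elim imageE) simp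
    have "Cmap q \<sigma> \<epsilon> a j = Cmap q \<sigma> \<epsilon> b j" using eq by simp
    then show ?thesis using j by (auto simp: Cmap_def split: if_splits)
  next
    case False
    then show ?thesis using a b by auto
  qed
qed

lemma Cmap_Cinv:
  assumes s: "\<sigma> permutes {1..q}" and a: "\<And>j. j = 0 \<or> j > q \<Longrightarrow> a j = 0"
  shows "Cmap q \<sigma> \<epsilon> (Cinv q \<sigma> \<epsilon> a) = a"
proof
  fix j
  show "Cmap q \<sigma> \<epsilon> (Cinv q \<sigma> \<epsilon> a) j = a j"
  proof (cases "1 \<le> j \<and> j \<le> q")
    case True
    then have sj: "1 \<le> \<sigma> j \<and> \<sigma> j \<le> q" using permutes_in_image[OF s, of j] by simp
    have ij: "inv \<sigma> (\<sigma> j) = j" using permutes_inverses(2)[OF s] by simp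
    show ?thesis using True sj ij by (auto simp: Cmap_def Cinv_def)
  next
    case False
    then show ?thesis using a by (auto simp: Cmap_def)
  qed
qed

lemma Cinv_car: "Cinv q \<sigma> \<epsilon> a j = 0" if "j = 0 \<or> j > q"
  using that by (auto simp: Cinv_def)
lemma Cmap_car: "Cmap q \<sigma> \<epsilon> a j = 0" if "j = 0 \<or> j > q"
  using that by (auto simp: Cmap_def)

lemma dual_ap_omega: "dual_ap (omega q \<mu> a b) s = einner q (rho q \<mu> s a) b"
proof -
  have "rho q \<mu> s a = cadd (cscale (fst s) (rho q \<mu> (1,0) a)) (cscale (snd s) (rho q \<mu> (0,1) a))"
    by (cases s) (auto simp: rho_def cadd_def cscale_def dual_ap_def fun_eq_iff algebra_simps)
  then show ?thesis
    by (simp add: omega_def dual_ap_def einner_cadd1 einner_cscale1)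
qed


definition Bi1 :: "real \<times> real \<Rightarrow> real \<times> real \<Rightarrow> real \<times> real" where
  "Bi1 b1 b2 = (snd b2 / det2 b1 b2, - snd b1 / det2 b1 b2)"
definition Bi2 :: "real \<times> real \<Rightarrow> real \<times> real \<Rightarrow> real \<times> real" where
  "Bi2 b1 b2 = (- fst b2 / det2 b1 b2, fst b1 / det2 b1 b2)"

lemma frac_aux: fixes d X Y p u s :: real
  assumes "d \<noteq> 0" "X * p + Y * u = s * d" shows "X / d * p + Y / d * u = s"
proof -
  have "X / d * p + Y / d * u = (X * p + Y * u) / d" by (simp add: add_divide_distrib)
  then show ?thesis using assms by simp
qed

lemma frac_aux2: fixes d X Y p u s :: real
  assumes "d \<noteq> 0" "X * p - Y * u = s * d" shows "X * (p / d) + Y * (- u / d) = s"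
proof -
  have "X * (p / d) + Y * (- u / d) = (X * p - Y * u) / d" by (simp add: diff_divide_distrib)
  then show ?thesis using assms by simp
qed

lemma inv_aux1: fixes d p q u v s1 s2 :: real assumes "d = p * v - q * u" "d \<noteq> 0"
  shows "s1 * (v / d) + s2 * (- u / d) = (s1 * v - s2 * u) / d"
    "s1 * (- q / d) + s2 * (p / d) = (p * s2 - s1 * q) / d"
    "(s1 * v - s2 * u) / d * p + (p * s2 - s1 * q) / d * u = s1"
    "(s1 * v - s2 * u) / d * q + (p * s2 - s1 * q) / d * v = s2"
    "(s1 * p + s2 * u) * (v / d) + (s1 * q + s2 * v) * (- u / d) = s1"
    "(s1 * p + s2 * u) * (- q / d) + (s1 * q + s2 * v) * (p / d) = s2"
proof -
  show "s1 * (v / d) + s2 * (- u / d) = (s1 * v - s2 * u) / d" by (simp add: diff_divide_distrib)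
  show "s1 * (- q / d) + s2 * (p / d) = (p * s2 - s1 * q) / d" by (simp add: diff_divide_distrib)
  show "(s1 * v - s2 * u) / d * p + (p * s2 - s1 * q) / d * u = s1"
    by (rule frac_aux[OF assms(2)]) (simp add: assms(1) algebra_simps)
  show "(s1 * v - s2 * u) / d * q + (p * s2 - s1 * q) / d * v = s2"
    by (rule frac_aux[OF assms(2)]) (simp add: assms(1) algebra_simps)
  show "(s1 * p + s2 * u) * (v / d) + (s1 * q + s2 * v) * (- u / d) = s1"
    by (rule frac_aux2[OF assms(2)]) (simp add: assms(1) algebra_simps)
  have "(s1 * p + s2 * u) * (- q / d) + (s1 * q + s2 * v) * (p / d) = (s1 * q + s2 * v) * (p / d) + (s1 * p + s2 * u) * (- q / d)"
    by simp
  also have "\<dots> = s2" by (rule frac_aux2[OF assms(2)]) (simp add: assms(1) algebra_simps)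
  finally show "(s1 * p + s2 * u) * (- q / d) + (s1 * q + s2 * v) * (p / d) = s2" .
qed

lemma lmap_inv1: assumes "det2 b1 b2 \<noteq> 0"
  shows "lmap b1 b2 (lmap (Bi1 b1 b2) (Bi2 b1 b2) s) = s"
proof -
  obtain p q u v s1 s2 where b: "b1 = (p, q)" "b2 = (u, v)" "s = (s1, s2)" by (cases b1, cases b2, cases s) auto
  define d where "d = p * v - q * u"
  have d: "d \<noteq> 0" using assms b by (simp add: det2_def d_def)
  have "lmap (Bi1 b1 b2) (Bi2 b1 b2) s = ((s1 * v - s2 * u) / d, (p * s2 - s1 * q) / d)"
    using inv_aux1[OF d_def d, of s1 s2] b by (simp add: lmap_def Bi1_def Bi2_def det2_def d_def[symmetric])
  then show ?thesis using inv_aux1[OF d_def d, of s1 s2] b by (simp add: lmap_def)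
qed

lemma lmap_inv2: assumes "det2 b1 b2 \<noteq> 0"
  shows "lmap (Bi1 b1 b2) (Bi2 b1 b2) (lmap b1 b2 s) = s"
proof -
  obtain p q u v s1 s2 where b: "b1 = (p, q)" "b2 = (u, v)" "s = (s1, s2)" by (cases b1, cases b2, cases s) auto
  define d where "d = p * v - q * u"
  have d: "d \<noteq> 0" using assms b by (simp add: det2_def d_def)
  have "lmap b1 b2 s = (s1 * p + s2 * u, s1 * q + s2 * v)" using b by (simp add: lmap_def)
  then show ?thesis using inv_aux1[OF d_def d, of s1 s2] b
    by (simp add: lmap_def Bi1_def Bi2_def det2_def d_def[symmetric])
qed

lemma lmap_add: "lmap b1 b2 (s + t) = lmap b1 b2 s + lmap b1 b2 t"
  by (simp add: lmap_def algebra_simps)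
lemma lmap_scale: "lmap b1 b2 (c *\<^sub>R s) = c *\<^sub>R lmap b1 b2 s"
  by (simp add: lmap_def algebra_simps)
lemma lmap_zero[simp]: "lmap b1 b2 (0, 0) = (0, 0)"
  by (simp add: lmap_def zero_prod_def)

definition Zmap :: "real \<times> real \<Rightarrow> real \<times> real \<Rightarrow> real \<times> real \<Rightarrow> real \<times> real" where
  "Zmap b1 b2 z = (dual_ap z (Bi1 b1 b2), dual_ap z (Bi2 b1 b2))"
definition Zinv :: "real \<times> real \<Rightarrow> real \<times> real \<Rightarrow> real \<times> real \<Rightarrow> real \<times> real" where
  "Zinv b1 b2 z = (dual_ap z b1, dual_ap z b2)"

lemma dual_ap_Zmap: "dual_ap (Zmap b1 b2 z) s = dual_ap z (lmap (Bi1 b1 b2) (Bi2 b1 b2) s)"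
  by (simp add: Zmap_def dual_ap_lmap)
lemma dual_ap_Zinv: "dual_ap (Zinv b1 b2 z) s = dual_ap z (lmap b1 b2 s)"
  by (simp add: Zinv_def dual_ap_lmap)

lemma dual_ext: assumes "\<And>s. dual_ap u s = dual_ap v s" shows "u = v"
proof -
  have "dual_ap u (1,0) = dual_ap v (1,0)" "dual_ap u (0,1) = dual_ap v (0,1)" using assms by auto
  then show ?thesis by (cases u, cases v) (simp add: dual_ap_def)
qed

lemma Zmap_B: assumes "det2 b1 b2 \<noteq> 0"
  shows "dual_ap (Zmap b1 b2 z) (lmap b1 b2 t) = dual_ap z t"
  by (simp add: dual_ap_Zmap lmap_inv2[OF assms])

lemma Zmap_Zinv: assumes "det2 b1 b2 \<noteq> 0" shows "Zmap b1 b2 (Zinv b1 b2 z) = z"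
  by (rule dual_ext) (simp add: dual_ap_Zmap dual_ap_Zinv lmap_inv1[OF assms])

lemma Zmap_add: "Zmap b1 b2 (z + z') = Zmap b1 b2 z + Zmap b1 b2 z'"
  by (simp add: Zmap_def dual_ap_add)
lemma Zmap_scale: "Zmap b1 b2 (c *\<^sub>R z) = c *\<^sub>R Zmap b1 b2 z"
  by (simp add: Zmap_def dual_ap_scale)
lemma Zmap_diff: "Zmap b1 b2 (z - z') = Zmap b1 b2 z - Zmap b1 b2 z'"
  by (simp add: Zmap_def dual_ap_diff)

lemma Zmap_omega:
  assumes d: "det2 b1 b2 \<noteq> 0" and s: "\<sigma> permutes {1..q}" and e: "\<forall>j. \<epsilon> j \<in> {-1, 1}"
    and r: "\<forall>j\<in>{1..q}. \<forall>t. dual_ap (\<mu>' j) (lmap b1 b2 t) = \<epsilon> j * dual_ap (\<mu> (\<sigma> j)) t"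
  shows "Zmap b1 b2 (omega q \<mu> a b) = omega q \<mu>' (Cmap q \<sigma> \<epsilon> a) (Cmap q \<sigma> \<epsilon> b)"
proof (rule dual_ext)
  fix s
  let ?u = "lmap (Bi1 b1 b2) (Bi2 b1 b2) s"
  have r2: "\<forall>j\<in>{1..q}. dual_ap (\<mu>' j) s = \<epsilon> j * dual_ap (\<mu> (\<sigma> j)) ?u"
    using r lmap_inv1[OF d, of s] by metis
  have "dual_ap (Zmap b1 b2 (omega q \<mu> a b)) s = einner q (rho q \<mu> ?u a) b"
    by (simp add: dual_ap_Zmap dual_ap_omega)
  also have "\<dots> = einner q (Cmap q \<sigma> \<epsilon> (rho q \<mu> ?u a)) (Cmap q \<sigma> \<epsilon> b)"
    by (simp add: Cmap_einner[OF s])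
  also have "\<dots> = einner q (rho q \<mu>' s (Cmap q \<sigma> \<epsilon> a)) (Cmap q \<sigma> \<epsilon> b)"
    by (simp add: Cmap_rho[OF s e r2])
  also have "\<dots> = dual_ap (omega q \<mu>' (Cmap q \<sigma> \<epsilon> a) (Cmap q \<sigma> \<epsilon> b)) s"
    by (simp add: dual_ap_omega)
  finally show "dual_ap (Zmap b1 b2 (omega q \<mu> a b)) s = dual_ap (omega q \<mu>' (Cmap q \<sigma> \<epsilon> a) (Cmap q \<sigma> \<epsilon> b)) s" .
qed


lemma Zinv_Zmap: assumes "det2 b1 b2 \<noteq> 0" shows "Zinv b1 b2 (Zmap b1 b2 z) = z"
  by (rule dual_ext) (simp add: dual_ap_Zmap dual_ap_Zinv lmap_inv2[OF assms])

definition Phi2 :: "nat \<Rightarrow> (nat \<Rightarrow> nat) \<Rightarrow> (nat \<Rightarrow> real) \<Rightarrow> real \<times> real \<Rightarrow> real \<times> real \<Rightarrow>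
   (real \<times> real) \<times> (nat \<Rightarrow> complex) \<times> (real \<times> real) \<Rightarrow> (real \<times> real) \<times> (nat \<Rightarrow> complex) \<times> (real \<times> real)" where
  "Phi2 q \<sigma> \<epsilon> b1 b2 = (\<lambda>(z, a, t). (Zmap b1 b2 z, Cmap q \<sigma> \<epsilon> a, lmap b1 b2 t))"

lemma osc2_metric_iso:
  assumes d: "det2 b1 b2 \<noteq> 0" and s: "\<sigma> permutes {1..q}" and e: "\<forall>j. \<epsilon> j \<in> {-1, 1}"
    and r: "\<forall>j\<in>{1..q}. \<forall>t. dual_ap (\<mu>' j) (lmap b1 b2 t) = \<epsilon> j * dual_ap (\<mu> (\<sigma> j)) t"
  shows "metric_lie_iso (osc2 q \<mu>) (osc2 q \<mu>') (Phi2 q \<sigma> \<epsilon> b1 b2)"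
proof -
  let ?P = "Phi2 q \<sigma> \<epsilon> b1 b2"
  have rt: "\<forall>j\<in>{1..q}. dual_ap (\<mu>' j) (lmap b1 b2 t) = \<epsilon> j * dual_ap (\<mu> (\<sigma> j)) t" for t
    using r by blast
  have inj: "inj_on ?P (car (osc2 q \<mu>))"
  proof (rule inj_onI)
    fix X Y assume X: "X \<in> car (osc2 q \<mu>)" and Y: "Y \<in> car (osc2 q \<mu>)" and eq: "?P X = ?P Y"
    obtain z a t z' a' t' where XY: "X = (z, a, t)" "Y = (z', a', t')" by (cases X, cases Y) auto
    have 1: "Zmap b1 b2 z = Zmap b1 b2 z'" "Cmap q \<sigma> \<epsilon> a = Cmap q \<sigma> \<epsilon> a'" "lmap b1 b2 t = lmap b1 b2 t'"
      using eq by (simp_all add: XY Phi2_def)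
    have "z = z'" using arg_cong[OF 1(1), of "Zinv b1 b2"] by (simp add: Zinv_Zmap[OF d])
    moreover have "a = a'"
    proof (rule Cmap_inj[OF s e _ _ 1(2)])
      show "\<And>j. j = 0 \<or> j > q \<Longrightarrow> a j = 0" using X unfolding XY car_osc2 by blast
      show "\<And>j. j = 0 \<or> j > q \<Longrightarrow> a' j = 0" using Y unfolding XY car_osc2 by blast
    qed
    moreover have "t = t'" using arg_cong[OF 1(3), of "lmap (Bi1 b1 b2) (Bi2 b1 b2)"] by (simp add: lmap_inv2[OF d])
    ultimately show "X = Y" by (simp add: XY)
  qed
  have img: "?P ` car (osc2 q \<mu>) = car (osc2 q \<mu>')"
  proof
    show "?P ` car (osc2 q \<mu>) \<subseteq> car (osc2 q \<mu>')"
      by (auto simp: Phi2_def car_osc2 Cmap_car)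
    show "car (osc2 q \<mu>') \<subseteq> ?P ` car (osc2 q \<mu>)"
    proof
      fix Y assume Y: "Y \<in> car (osc2 q \<mu>')"
      obtain z a t where Yd: "Y = (z, a, t)" by (cases Y) auto
      have a: "\<And>j. j = 0 \<or> j > q \<Longrightarrow> a j = 0" using Y unfolding Yd car_osc2 by blast
      have "Y = ?P (Zinv b1 b2 z, Cinv q \<sigma> \<epsilon> a, lmap (Bi1 b1 b2) (Bi2 b1 b2) t)"
        by (simp add: Yd Phi2_def Zmap_Zinv[OF d] Cmap_Cinv[OF s a] lmap_inv1[OF d])
      moreover have "(Zinv b1 b2 z, Cinv q \<sigma> \<epsilon> a, lmap (Bi1 b1 b2) (Bi2 b1 b2) t) \<in> car (osc2 q \<mu>)"
        by (simp add: car_osc2 Cinv_car)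
      ultimately show "Y \<in> ?P ` car (osc2 q \<mu>)" by blast
    qed
  qed
  show ?thesis unfolding metric_lie_iso_def lie_iso_def
  proof (intro conjI ballI allI)
    show "bij_betw ?P (car (osc2 q \<mu>)) (car (osc2 q \<mu>'))" using inj img by (simp add: bij_betw_def)
  next
    fix X Y assume "X \<in> car (osc2 q \<mu>)" "Y \<in> car (osc2 q \<mu>)"
    obtain z a t z' a' t' where XY: "X = (z, a, t)" "Y = (z', a', t')" by (cases X, cases Y) auto
    show "?P (vadd (osc2 q \<mu>) X Y) = vadd (osc2 q \<mu>') (?P X) (?P Y)"
      by (simp add: XY Phi2_def vadd_osc2 Zmap_add Cmap_cadd lmap_add)
  next
    fix c X assume "X \<in> car (osc2 q \<mu>)"
    obtain z a t where XY: "X = (z, a, t)" by (cases X) auto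
    show "?P (vscale (osc2 q \<mu>) c X) = vscale (osc2 q \<mu>') c (?P X)"
      by (simp add: XY Phi2_def vscale_osc2 Zmap_scale Cmap_cscale lmap_scale)
  next
    fix X Y assume "X \<in> car (osc2 q \<mu>)" "Y \<in> car (osc2 q \<mu>)"
    obtain z a t z' a' t' where XY: "X = (z, a, t)" "Y = (z', a', t')" by (cases X, cases Y) auto
    show "?P (brk (osc2 q \<mu>) X Y) = brk (osc2 q \<mu>') (?P X) (?P Y)"
      by (simp add: XY Phi2_def brk_osc2 Zmap_omega[OF d s e r] Cmap_cdiff Cmap_rho[OF s e rt])
  next
    fix X Y assume "X \<in> car (osc2 q \<mu>)" "Y \<in> car (osc2 q \<mu>)"
    obtain z a t z' a' t' where XY: "X = (z, a, t)" "Y = (z', a', t')" by (cases X, cases Y) auto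
    show "frm (osc2 q \<mu>') (?P X) (?P Y) = frm (osc2 q \<mu>) X Y"
      by (simp add: XY Phi2_def osc2_def Zmap_B[OF d] Cmap_einner[OF s])
  qed
qed


lemma lie_iso_of_metric: "metric_lie_iso A B f \<Longrightarrow> lie_iso A B f"
  by (simp add: metric_lie_iso_def)

lemma partb:
  assumes \<mu>nz: "\<forall>j\<in>{1..q}. \<mu> j \<noteq> 0" and \<mu>'nz: "\<forall>j\<in>{1..q}. \<mu>' j \<noteq> 0"
  shows "lie_isomorphic (osc2 q \<mu>) (osc2 q \<mu>') \<longleftrightarrow> metric_isomorphic (osc2 q \<mu>) (osc2 q \<mu>')"
proof
  assume "metric_isomorphic (osc2 q \<mu>) (osc2 q \<mu>')"
  then show "lie_isomorphic (osc2 q \<mu>) (osc2 q \<mu>')"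
    by (auto simp: metric_isomorphic_def lie_isomorphic_def metric_lie_iso_def)
next
  assume "lie_isomorphic (osc2 q \<mu>) (osc2 q \<mu>')"
  then obtain f where f: "lie_iso (osc2 q \<mu>) (osc2 q \<mu>') f" by (auto simp: lie_isomorphic_def)
  have g: "lie_iso (osc2 q \<mu>') (osc2 q \<mu>) (inv_into (car (osc2 q \<mu>)) f)"
    by (rule lie_iso_inv[OF f closed_osc2])
  obtain \<sigma> \<epsilon> a1 a2 where s: "\<sigma> permutes {1..q}" and e: "\<forall>j. \<epsilon> j \<in> {-1, 1::real}"
    and r: "\<forall>j\<in>{1..q}. \<forall>t. dual_ap (\<mu>' j) (lmap a1 a2 t) = \<epsilon> j * dual_ap (\<mu> (\<sigma> j)) t"
    using osc2_data[OF f \<mu>nz] by blast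
  obtain \<tau> \<epsilon>' c1 c2 where s': "\<tau> permutes {1..q}" and e': "\<forall>j. \<epsilon>' j \<in> {-1, 1::real}"
    and r': "\<forall>j\<in>{1..q}. \<forall>t. dual_ap (\<mu> j) (lmap c1 c2 t) = \<epsilon>' j * dual_ap (\<mu>' (\<tau> j)) t"
    using osc2_data[OF g \<mu>'nz] by blast
  define F where "F j = \<epsilon> j *\<^sub>R \<mu> (\<sigma> j)" for j
  have Fnz: "\<forall>j\<in>{1..q}. F j \<noteq> 0"
  proof
    fix j assume j: "j \<in> {1..q}"
    have "\<sigma> j \<in> {1..q}" using permutes_in_image[OF s] j by simp
    then have "\<mu> (\<sigma> j) \<noteq> 0" using \<mu>nz by blast
    moreover have "\<epsilon> j \<noteq> 0" using e[rule_format, of j] by auto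
    ultimately show "F j \<noteq> 0" by (simp add: F_def)
  qed
  have Q: "\<forall>j\<in>{1..q}. \<forall>t. dual_ap (\<mu>' j) (lmap a1 a2 t) = dual_ap (F j) t"
    using r by (simp add: F_def dual_ap_scale)
  have H2: "\<exists>w'. w' \<noteq> 0 \<and> (\<forall>j\<in>{1..q}. dual_ap (\<mu>' j) w' = 0)"
    if w: "w \<noteq> 0" and Fw: "\<forall>j\<in>{1..q}. dual_ap (F j) w = 0" for w
  proof -
    have "\<forall>k\<in>{1..q}. dual_ap (\<mu> k) w = 0"
    proof
      fix k assume k: "k \<in> {1..q}"
      have "k \<in> \<sigma> ` {1..q}" using permutes_image[OF s] k by simp
      then obtain j where j: "j \<in> {1..q}" "\<sigma> j = k" by (elim imageE) simp
      have "\<epsilon> j * dual_ap (\<mu> k) w = 0" using Fw[rule_format, OF j(1)] j(2) by (simp add: F_def dual_ap_scale)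
      moreover have "\<epsilon> j \<noteq> 0" using e[rule_format, of j] by auto
      ultimately show "dual_ap (\<mu> k) w = 0" by simp
    qed
    moreover have "\<forall>j\<in>{1..q}. \<epsilon>' j \<noteq> 0"
    proof
      fix j show "\<epsilon>' j \<noteq> 0" using e'[rule_format, of j] by auto
    qed
    ultimately show ?thesis using rank_lemma[OF r' _ s' w] by blast
  qed
  obtain b1 b2 where b: "det2 b1 b2 \<noteq> 0"
    and rb: "\<forall>j\<in>{1..q}. \<forall>t. dual_ap (\<mu>' j) (lmap b1 b2 t) = dual_ap (F j) t"
  proof -
    have "\<exists>b1 b2. det2 b1 b2 \<noteq> 0 \<and> (\<forall>j\<in>{1..q}. \<forall>t. dual_ap (\<mu>' j) (lmap b1 b2 t) = dual_ap (F j) t)"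
    proof (rule fix_inv[OF Fnz \<mu>'nz Q])
      fix w assume "w \<noteq> 0" "\<forall>j\<in>{1..q}. dual_ap (F j) w = 0"
      then show "\<exists>w'. w' \<noteq> 0 \<and> (\<forall>j\<in>{1..q}. dual_ap (\<mu>' j) w' = 0)" by (rule H2)
    qed
    then show ?thesis using that by blast
  qed
  have rb2: "\<forall>j\<in>{1..q}. \<forall>t. dual_ap (\<mu>' j) (lmap b1 b2 t) = \<epsilon> j * dual_ap (\<mu> (\<sigma> j)) t"
    using rb by (simp add: F_def dual_ap_scale)
  show "metric_isomorphic (osc2 q \<mu>) (osc2 q \<mu>')"
    unfolding metric_isomorphic_def using osc2_metric_iso[OF b s e rb2] by blast
qed


lemma car_dq: "(z, a, s, t) \<in> car (dq q \<mu>) \<longleftrightarrow> (\<forall>j. (j = 0 \<or> j > q) \<longrightarrow> a j = 0)"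
  by (simp add: dq_def)
lemma brk_dq: "brk (dq q \<mu>) (z, a, s, t) (z', a', s', t') =
   (omega q \<mu> a a' - s' *\<^sub>R flat2 t + s *\<^sub>R flat2 t', cdiff (rho q \<mu> t a') (rho q \<mu> t' a), alpha2 t t', (0, 0))"
  by (simp add: dq_def)
lemma vadd_dq: "vadd (dq q \<mu>) (z, a, s, t) (z', a', s', t') = (z + z', cadd a a', s + s', t + t')"
  by (simp add: dq_def)
lemma vscale_dq: "vscale (dq q \<mu>) c (z, a, s, t) = (c *\<^sub>R z, cscale c a, c * s, c *\<^sub>R t)"
  by (simp add: dq_def)
lemma frm_dq: "frm (dq q \<mu>) (z, a, s, t) (z', a', s', t') = dual_ap z t' + dual_ap z' t + einner q a a' + s * s'"
  by (simp add: dq_def)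

lemma closed_dq: "closed_mla (dq q \<mu>)"
  unfolding closed_mla_def
  by (auto simp: dq_def cadd_def cscale_def cdiff_def rho_def)

lemma alpha2_0[simp]: "alpha2 t (0, 0) = 0" "alpha2 (0, 0) t = 0" by (simp_all add: alpha2_def)
lemma flat2_0[simp]: "flat2 (0, 0) = (0, 0)" by (simp add: flat2_def alpha2_def)

lemma dq_kern_in:
  assumes l: "l > 0" and a': "a' \<in> SJ (Jset q \<mu> t l)"
  shows "((-1/l) *\<^sub>R omega q \<mu> a (rho q \<mu> t a'), a', 0::real, (0::real, 0::real)) \<in> KS (dq q \<mu>) (z, a, s, t) (- l)"
proof -
  have c: "((-1/l) *\<^sub>R omega q \<mu> a (rho q \<mu> t a'), a', 0::real, (0::real, 0::real)) \<in> car (dq q \<mu>)"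
    using a' by (auto simp: car_dq SJ_def Jset_def)
  show ?thesis unfolding KS_def
    using c l rho_rho_SJ[OF a'] by (simp add: brk_dq vscale_dq zero_prod_def)
qed

lemma dq_kern_out:
  assumes l: "l > 0" and Y: "Y \<in> KS (dq q \<mu>) (z, a, s, t) (- l)"
  shows "fst (snd Y) \<in> SJ (Jset q \<mu> t l) \<and> snd (snd Y) = (0, (0, 0)) \<and>
         fst Y = (-1/l) *\<^sub>R omega q \<mu> a (rho q \<mu> t (fst (snd Y)))"
proof -
  obtain z' a' s' t' where Yd: "Y = (z', a', s', t')" by (cases Y) auto
  have Yc: "(z', a', s', t') \<in> car (dq q \<mu>)" using Y by (simp add: KS_def Yd)
  have c: "\<And>j. j = 0 \<or> j > q \<Longrightarrow> a' j = 0" using Yc unfolding car_dq by blast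
  have e: "brk (dq q \<mu>) (z, a, s, t) (brk (dq q \<mu>) (z, a, s, t) Y) = vscale (dq q \<mu>) (- l) Y"
    using Y by (simp add: KS_def)
  then have "(0, 0) = - (l *\<^sub>R t')" by (simp add: Yd brk_dq vscale_dq)
  then have "l *\<^sub>R t' = 0" by (metis neg_equal_0_iff_equal zero_prod_def)
  then have t0: "t' = (0, 0)" using l by (metis less_irrefl scaleR_eq_0_iff zero_prod_def)
  have s0: "s' = 0" using e t0 l by (simp add: Yd brk_dq vscale_dq)
  have e2: "rho q \<mu> t (rho q \<mu> t a') = cscale (- l) a'"
    using e t0 by (simp add: Yd brk_dq vscale_dq)
  have "omega q \<mu> a (rho q \<mu> t a') + (0, 0) = (- l) *\<^sub>R z'"
    using e t0 s0 by (simp add: Yd brk_dq vscale_dq)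
  then have e3: "omega q \<mu> a (rho q \<mu> t a') = (- l) *\<^sub>R z'"
    by (metis add.right_neutral zero_prod_def)
  have "z' = (-1/l) *\<^sub>R omega q \<mu> a (rho q \<mu> t a')" using e3 l by simp
  then show ?thesis using rho_rho_eig[OF c e2] t0 s0 by (simp add: Yd)
qed

lemma dq_count_le:
  assumes f: "lie_iso (dq q \<mu>) (dq q \<mu>') f" and X: "(z, a, s, t) \<in> car (dq q \<mu>)"
    and fX: "f (z, a, s, t) = (z2, a2, s2, t2)" and l: "l > 0"
  shows "card (Jset q \<mu> t l) \<le> card (Jset q \<mu>' t2 l)"
proof (rule dim_transfer[OF f closed_dq X Jset_fin Jset_fin,
      where k = "- l" and r = "\<lambda>a'. ((-1/l) *\<^sub>R omega q \<mu> a (rho q \<mu> t a'), a', 0, (0, 0))"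
      and p = "\<lambda>Y. fst (snd Y)"])
  fix a' assume "a' \<in> SJ (Jset q \<mu> t l)"
  then show "((-1/l) *\<^sub>R omega q \<mu> a (rho q \<mu> t a'), a', 0, (0, 0)) \<in> KS (dq q \<mu>) (z, a, s, t) (- l)"
    using dq_kern_in[OF l] by blast
next
  fix a1 b1
  show "((-1/l) *\<^sub>R omega q \<mu> a (rho q \<mu> t (cadd a1 b1)), cadd a1 b1, 0, (0, 0)) =
    vadd (dq q \<mu>) ((-1/l) *\<^sub>R omega q \<mu> a (rho q \<mu> t a1), a1, 0, (0, 0))
      ((-1/l) *\<^sub>R omega q \<mu> a (rho q \<mu> t b1), b1, 0, (0, 0))"
    by (simp add: vadd_dq rho_cadd omega_cadd2 scaleR_add_right)
next
  fix c a1
  show "((-1/l) *\<^sub>R omega q \<mu> a (rho q \<mu> t (cscale c a1)), cscale c a1, 0, (0, 0)) =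
    vscale (dq q \<mu>) c ((-1/l) *\<^sub>R omega q \<mu> a (rho q \<mu> t a1), a1, 0, (0, 0))"
    by (simp add: vscale_dq rho_cscale omega_cscale2 zero_prod_def)
next
  show "inj_on (\<lambda>a'. ((-1/l) *\<^sub>R omega q \<mu> a (rho q \<mu> t a'), a', 0::real, (0::real, 0::real))) (SJ (Jset q \<mu> t l))"
    by (auto simp: inj_on_def)
next
  fix Y assume "Y \<in> KS (dq q \<mu>') (f (z, a, s, t)) (- l)"
  then show "fst (snd Y) \<in> SJ (Jset q \<mu>' t2 l)" using dq_kern_out[OF l] fX by fastforce
next
  show "inj_on (\<lambda>Y. fst (snd Y)) (KS (dq q \<mu>') (f (z, a, s, t)) (- l))"
  proof (rule inj_onI)
    fix Y Z assume "Y \<in> KS (dq q \<mu>') (f (z, a, s, t)) (- l)" "Z \<in> KS (dq q \<mu>') (f (z, a, s, t)) (- l)"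
      "fst (snd Y) = fst (snd Z)"
    then show "Y = Z" using dq_kern_out[OF l, of Y q \<mu>' z2 a2 s2 t2] dq_kern_out[OF l, of Z q \<mu>' z2 a2 s2 t2] fX
      by (metis prod.collapse)
  qed
next
  fix Y Z :: "(real \<times> real) \<times> (nat \<Rightarrow> complex) \<times> real \<times> real \<times> real"
  show "fst (snd (vadd (dq q \<mu>') Y Z)) = cadd (fst (snd Y)) (fst (snd Z))"
    by (cases Y; cases Z) (simp add: vadd_dq)
next
  fix c and Y :: "(real \<times> real) \<times> (nat \<Rightarrow> complex) \<times> real \<times> real \<times> real"
  show "fst (snd (vscale (dq q \<mu>') c Y)) = cscale c (fst (snd Y))"
    by (cases Y) (simp add: vscale_dq)
qed

lemma dq_count_eq:
  assumes f: "lie_iso (dq q \<mu>) (dq q \<mu>') f" and X: "(z, a, s, t) \<in> car (dq q \<mu>)"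
    and fX: "f (z, a, s, t) = (z2, a2, s2, t2)" and l: "l > 0"
  shows "card (Jset q \<mu> t l) = card (Jset q \<mu>' t2 l)"
proof -
  have g: "lie_iso (dq q \<mu>') (dq q \<mu>) (inv_into (car (dq q \<mu>)) f)"
    by (rule lie_iso_inv[OF f closed_dq])
  have fc: "(z2, a2, s2, t2) \<in> car (dq q \<mu>')" using f X fX by (metis lie_iso_def bij_betwE)
  have gX: "inv_into (car (dq q \<mu>)) f (z2, a2, s2, t2) = (z, a, s, t)"
    using lie_iso_inv_app[OF f X] fX by simp
  show ?thesis using dq_count_le[OF f X fX l] dq_count_le[OF g fc gX l] by simp
qed


definition dqT :: "(((real \<times> real) \<times> (nat \<Rightarrow> complex) \<times> real \<times> real \<times> real) \<Rightarrow> ((real \<times> real) \<times> (nat \<Rightarrow> complex) \<times> real \<times> real \<times> real))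
   \<Rightarrow> real \<times> real \<Rightarrow> real \<times> real" where
  "dqT f t = snd (snd (snd (f ((0,0), (\<lambda>j. 0), 0, t))))"

lemma dq_T_lin:
  assumes f: "lie_iso (dq q \<mu>) (dq q \<mu>') f"
  shows "dqT f t = lmap (dqT f (1,0)) (dqT f (0,1)) t"
proof -
  define E1 where "E1 = ((0::real,0::real), (\<lambda>j::nat. 0::complex), 0::real, (1::real,0::real))"
  define E2 where "E2 = ((0::real,0::real), (\<lambda>j::nat. 0::complex), 0::real, (0::real,1::real))"
  have c1: "E1 \<in> car (dq q \<mu>)" "E2 \<in> car (dq q \<mu>)" by (auto simp: E1_def E2_def car_dq)
  have s1: "vscale (dq q \<mu>) (fst t) E1 \<in> car (dq q \<mu>)" "vscale (dq q \<mu>) (snd t) E2 \<in> car (dq q \<mu>)"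
    by (auto simp: E1_def E2_def car_dq vscale_dq)
  have eq: "((0,0), (\<lambda>j. 0), 0, t) = vadd (dq q \<mu>) (vscale (dq q \<mu>) (fst t) E1) (vscale (dq q \<mu>) (snd t) E2)"
    by (cases t) (simp add: E1_def E2_def vadd_dq vscale_dq zero_prod_def)
  have "f ((0,0), (\<lambda>j. 0), 0, t) = vadd (dq q \<mu>') (vscale (dq q \<mu>') (fst t) (f E1)) (vscale (dq q \<mu>') (snd t) (f E2))"
    using f s1 c1 by (simp add: eq lie_iso_def)
  then show ?thesis unfolding dqT_def
    by (cases "f E1"; cases "f E2") (simp add: vadd_dq vscale_dq lmap_def E1_def E2_def)
qed

lemma dq_data:
  assumes f: "lie_iso (dq q \<mu>) (dq q \<mu>') f" and \<mu>nz: "\<forall>j\<in>{1..q}. \<mu> j \<noteq> 0"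
  shows "\<exists>\<sigma> \<epsilon>. \<sigma> permutes {1..q} \<and> (\<forall>j. \<epsilon> j \<in> {-1, 1::real}) \<and>
     (\<forall>j\<in>{1..q}. \<forall>t. dual_ap (\<mu>' j) (lmap (dqT f (1,0)) (dqT f (0,1)) t) = \<epsilon> j * dual_ap (\<mu> (\<sigma> j)) t)"
proof -
  define a1 where "a1 = dqT f (1,0)"
  define a2 where "a2 = dqT f (0,1)"
  define G where "G j = (dual_ap (\<mu>' j) a1, dual_ap (\<mu>' j) a2)" for j
  have GT: "dual_ap (G j) t = dual_ap (\<mu>' j) (lmap a1 a2 t)" for j t
    by (simp add: G_def dual_ap_lmap)
  have cnt: "card {j\<in>{1..q}. (dual_ap (\<mu> j) t)\<^sup>2 = l} = card {j\<in>{1..q}. (dual_ap (G j) t)\<^sup>2 = l}"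
    if l: "l > 0" for t l
  proof -
    have X: "((0,0), (\<lambda>j. 0), 0, t) \<in> car (dq q \<mu>)" by (simp add: car_dq)
    have fX: "f ((0,0), (\<lambda>j. 0), 0, t) = (fst (f ((0,0), (\<lambda>j. 0), 0, t)), fst (snd (f ((0,0), (\<lambda>j. 0), 0, t))),
               fst (snd (snd (f ((0,0), (\<lambda>j. 0), 0, t)))), lmap a1 a2 t)"
      using dq_T_lin[OF f, of t] unfolding a1_def a2_def dqT_def by (metis prod.collapse)
    show ?thesis using dq_count_eq[OF f X fX l] by (simp add: Jset_def GT)
  qed
  obtain \<sigma> \<epsilon> where s: "\<sigma> permutes {1..q}" "\<forall>j. \<epsilon> j \<in> {-1, 1::real}" "\<forall>j\<in>{1..q}. G j = \<epsilon> j *\<^sub>R \<mu> (\<sigma> j)"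
    using forms_match[OF \<mu>nz cnt] by blast
  have "\<forall>j\<in>{1..q}. \<forall>t. dual_ap (\<mu>' j) (lmap a1 a2 t) = \<epsilon> j * dual_ap (\<mu> (\<sigma> j)) t"
    using s(3) by (simp add: GT[symmetric] dual_ap_scale)
  then show ?thesis using s(1,2) unfolding a1_def a2_def by blast
qed

lemma omega_zero1[simp]: "omega q \<mu> (\<lambda>j. 0) b = (0, 0)"
  by (simp add: omega_def einner_def)

lemma dq_sum3:
  assumes \<mu>nz: "\<forall>j\<in>{1..q}. \<mu> j \<noteq> 0" and X: "(z, a, s, (0, 0)) \<in> car (dq q \<mu>)"
  shows "\<exists>P1\<in>car (dq q \<mu>). \<exists>Q1\<in>car (dq q \<mu>). \<exists>P2\<in>car (dq q \<mu>). \<exists>Q2\<in>car (dq q \<mu>).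
     \<exists>P3\<in>car (dq q \<mu>). \<exists>Q3\<in>car (dq q \<mu>).
     (z, a, s, (0, 0)) = vadd (dq q \<mu>) (brk (dq q \<mu>) P1 Q1) (vadd (dq q \<mu>) (brk (dq q \<mu>) P2 Q2) (brk (dq q \<mu>) P3 Q3))"
proof -
  have z0: "0 \<notin> \<mu> ` {1..q}" using \<mu>nz by auto
  from gen_pt[of "{}" "\<mu> ` {1..q}", OF _ _ z0]
  obtain t0 where t0: "\<forall>u\<in>\<mu> ` {1..q}. dual_ap u t0 \<noteq> 0" by blast
  define a'' where "a'' j = (if 1 \<le> j \<and> j \<le> q then a j / (\<i> * complex_of_real (dual_ap (\<mu> j) t0)) else 0)" for j
  have a0: "\<And>j. j = 0 \<or> j > q \<Longrightarrow> a j = 0" using X unfolding car_dq by blast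
  have ra: "rho q \<mu> t0 a'' = a"
  proof
    fix j show "rho q \<mu> t0 a'' j = a j"
    proof (cases "1 \<le> j \<and> j \<le> q")
      case True
      then have "dual_ap (\<mu> j) t0 \<noteq> 0" using t0 by auto
      then show ?thesis using True by (simp add: rho_def a''_def)
    next
      case False then show ?thesis using a0 by (auto simp: rho_def)
    qed
  qed
  define P1 where "P1 = ((0::real, 0::real), (\<lambda>j::nat. 0::complex), 1::real, (0::real, 0::real))"
  define Q1 where "Q1 = ((0::real, 0::real), (\<lambda>j::nat. 0::complex), 0::real, (snd z, - fst z))"
  define P2 where "P2 = ((0::real, 0::real), (\<lambda>j::nat. 0::complex), 0::real, t0)"
  define Q2 where "Q2 = ((0::real, 0::real), a'', 0::real, (0::real, 0::real))"
  define P3 where "P3 = ((0::real, 0::real), (\<lambda>j::nat. 0::complex), 0::real, (1::real, 0::real))"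
  define Q3 where "Q3 = ((0::real, 0::real), (\<lambda>j::nat. 0::complex), 0::real, (0::real, s))"
  have cs: "P1 \<in> car (dq q \<mu>)" "Q1 \<in> car (dq q \<mu>)" "P2 \<in> car (dq q \<mu>)" "Q2 \<in> car (dq q \<mu>)"
    "P3 \<in> car (dq q \<mu>)" "Q3 \<in> car (dq q \<mu>)"
    by (auto simp: P1_def Q1_def P2_def Q2_def P3_def Q3_def car_dq a''_def)
  have "(z, a, s, (0, 0)) = vadd (dq q \<mu>) (brk (dq q \<mu>) P1 Q1) (vadd (dq q \<mu>) (brk (dq q \<mu>) P2 Q2) (brk (dq q \<mu>) P3 Q3))"
    by (cases z) (simp add: P1_def Q1_def P2_def Q2_def P3_def Q3_def brk_dq vadd_dq ra flat2_def alpha2_def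
        cadd_def cdiff_def)
  then show ?thesis using cs by blast
qed


lemma dq_det:
  assumes f: "lie_iso (dq q \<mu>) (dq q \<mu>') f" and \<mu>'nz: "\<forall>j\<in>{1..q}. \<mu>' j \<noteq> 0"
  shows "det2 (dqT f (1,0)) (dqT f (0,1)) \<noteq> 0"
proof
  assume "det2 (dqT f (1,0)) (dqT f (0,1)) = 0"
  then obtain w where w: "w \<noteq> 0" "lmap (dqT f (1,0)) (dqT f (0,1)) w = 0" using kernel_vec by blast
  have Tw: "dqT f w = (0, 0)" using w(2) dq_T_lin[OF f, of w] by (simp add: zero_prod_def)
  let ?g = "inv_into (car (dq q \<mu>)) f"
  have g: "lie_iso (dq q \<mu>') (dq q \<mu>) ?g" by (rule lie_iso_inv[OF f closed_dq])
  define X where "X = ((0::real,0::real), (\<lambda>j::nat. 0::complex), 0::real, w)"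
  have Xc: "X \<in> car (dq q \<mu>)" by (simp add: X_def car_dq)
  have fXc: "f X \<in> car (dq q \<mu>')" using f Xc by (metis lie_iso_def bij_betwE)
  obtain z a s where fX: "f X = (z, a, s, (0, 0))"
    using Tw unfolding dqT_def X_def[symmetric] by (metis prod.collapse)
  obtain P1 Q1 P2 Q2 P3 Q3 where P: "P1 \<in> car (dq q \<mu>')" "Q1 \<in> car (dq q \<mu>')" "P2 \<in> car (dq q \<mu>')"
    "Q2 \<in> car (dq q \<mu>')" "P3 \<in> car (dq q \<mu>')" "Q3 \<in> car (dq q \<mu>')"
    and eq: "f X = vadd (dq q \<mu>') (brk (dq q \<mu>') P1 Q1) (vadd (dq q \<mu>') (brk (dq q \<mu>') P2 Q2) (brk (dq q \<mu>') P3 Q3))"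
    using dq_sum3[OF \<mu>'nz, of z a s] fXc unfolding fX by blast
  have cl: "closed_mla (dq q \<mu>')" by (rule closed_dq)
  have b: "brk (dq q \<mu>') P1 Q1 \<in> car (dq q \<mu>')" "brk (dq q \<mu>') P2 Q2 \<in> car (dq q \<mu>')"
    "brk (dq q \<mu>') P3 Q3 \<in> car (dq q \<mu>')" using cl P by (auto simp: closed_mla_def)
  have v: "vadd (dq q \<mu>') (brk (dq q \<mu>') P2 Q2) (brk (dq q \<mu>') P3 Q3) \<in> car (dq q \<mu>')"
    using cl b by (auto simp: closed_mla_def)
  have gc: "\<And>Y. Y \<in> car (dq q \<mu>') \<Longrightarrow> ?g Y \<in> car (dq q \<mu>)" using g by (metis lie_iso_def bij_betwE)
  have "?g (f X) = X" using lie_iso_inv_app[OF f Xc] .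
  also have "?g (f X) = vadd (dq q \<mu>) (brk (dq q \<mu>) (?g P1) (?g Q1))
      (vadd (dq q \<mu>) (brk (dq q \<mu>) (?g P2) (?g Q2)) (brk (dq q \<mu>) (?g P3) (?g Q3)))"
    using g P b v unfolding eq lie_iso_def by simp
  finally have e: "X = vadd (dq q \<mu>) (brk (dq q \<mu>) (?g P1) (?g Q1))
      (vadd (dq q \<mu>) (brk (dq q \<mu>) (?g P2) (?g Q2)) (brk (dq q \<mu>) (?g P3) (?g Q3)))" by simp
  have tb: "snd (snd (snd (brk (dq q \<mu>) P Q))) = (0, 0)" for P Q
    by (cases P; cases Q) (simp add: brk_dq)
  have tv: "snd (snd (snd (vadd (dq q \<mu>) P Q))) = snd (snd (snd P)) + snd (snd (snd Q))" for P Q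
    by (cases P; cases Q) (simp add: vadd_dq)
  have "w = snd (snd (snd X))" by (simp add: X_def)
  also have "\<dots> = (0, 0)" by (subst e) (simp add: tv tb)
  finally show False using w(1) by (simp add: zero_prod_def)
qed


definition vecm :: "nat \<Rightarrow> (nat \<Rightarrow> real \<times> real) \<Rightarrow> real \<times> real \<Rightarrow> nat \<Rightarrow> real" where
  "vecm q \<mu> c = (\<lambda>j. if 1 \<le> j \<and> j \<le> q then dual_ap (\<mu> j) c else 0)"

lemma mu_image_vecm: "mu_image q \<mu> = range (vecm q \<mu>)"
proof -
  have "vecm q \<mu> (c1, c2) = (\<lambda>j. if 1 \<le> j \<and> j \<le> q then c1 * fst (\<mu> j) + c2 * snd (\<mu> j) else 0)" for c1 c2
    by (simp add: vecm_def dual_ap_def mult.commute fun_eq_iff)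
  then show ?thesis unfolding mu_image_def by (auto simp: image_def)
qed

lemma signed_vecm:
  assumes s: "\<sigma> permutes {1..q}"
    and r: "\<forall>j\<in>{1..q}. \<forall>t. dual_ap (\<mu>' j) (lmap a1 a2 t) = \<epsilon> j * dual_ap (\<mu> (\<sigma> j)) t"
  shows "(\<lambda>j. \<epsilon> j * vecm q \<mu> c (\<sigma> j)) = vecm q \<mu>' (lmap a1 a2 c)"
proof
  fix j
  show "\<epsilon> j * vecm q \<mu> c (\<sigma> j) = vecm q \<mu>' (lmap a1 a2 c) j"
  proof (cases "j \<in> {1..q}")
    case True
    then have "\<sigma> j \<in> {1..q}" using permutes_in_image[OF s] by simp
    then show ?thesis using True r[rule_format, OF True, of c] by (simp add: vecm_def)
  next
    case False
    then have "\<sigma> j = j" using permutes_not_in[OF s] by simp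
    then show ?thesis using False by (auto simp: vecm_def)
  qed
qed

lemma image_transfer:
  assumes s: "\<sigma> permutes {1..q}" and e: "\<forall>j. \<epsilon> j \<in> {-1, 1::real}" and d: "det2 a1 a2 \<noteq> 0"
    and r: "\<forall>j\<in>{1..q}. \<forall>t. dual_ap (\<mu>' j) (lmap a1 a2 t) = \<epsilon> j * dual_ap (\<mu> (\<sigma> j)) t"
  shows "equiv_signed_perm q (mu_image q \<mu>) (mu_image q \<mu>')"
  unfolding equiv_signed_perm_def
proof (intro exI[of _ \<sigma>] exI[of _ \<epsilon>] conjI s e)
  have "(\<lambda>v j. \<epsilon> j * v (\<sigma> j)) ` range (vecm q \<mu>) = range (\<lambda>c. vecm q \<mu>' (lmap a1 a2 c))"
    by (simp add: image_image signed_vecm[OF s r])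
  also have "\<dots> = range (vecm q \<mu>')"
  proof
    show "range (\<lambda>c. vecm q \<mu>' (lmap a1 a2 c)) \<subseteq> range (vecm q \<mu>')" by auto
    show "range (vecm q \<mu>') \<subseteq> range (\<lambda>c. vecm q \<mu>' (lmap a1 a2 c))"
    proof
      fix v assume "v \<in> range (vecm q \<mu>')"
      then obtain c where "v = vecm q \<mu>' c" by auto
      then have "v = vecm q \<mu>' (lmap a1 a2 (lmap (Bi1 a1 a2) (Bi2 a1 a2) c))" by (simp add: lmap_inv1[OF d])
      then show "v \<in> range (\<lambda>c. vecm q \<mu>' (lmap a1 a2 c))" by blast
    qed
  qed
  finally show "(\<lambda>v j. \<epsilon> j * v (\<sigma> j)) ` mu_image q \<mu> = mu_image q \<mu>'" by (simp add: mu_image_vecm)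
qed


lemma dual_ap_flat2: "dual_ap (flat2 u) v = alpha2 u v"
  by (simp add: flat2_def alpha2_def dual_ap_def algebra_simps)

lemma alpha_lmap: "alpha2 (lmap b1 b2 t) (lmap b1 b2 t') = det2 b1 b2 * alpha2 t t'"
  by (simp add: alpha2_def lmap_def det2_def algebra_simps)

lemma flat_lmap: assumes d: "det2 b1 b2 \<noteq> 0"
  shows "flat2 (lmap b1 b2 t) = det2 b1 b2 *\<^sub>R Zmap b1 b2 (flat2 t)"
proof (rule dual_ext)
  fix v
  have "dual_ap (det2 b1 b2 *\<^sub>R Zmap b1 b2 (flat2 t)) v = det2 b1 b2 * alpha2 t (lmap (Bi1 b1 b2) (Bi2 b1 b2) v)"
    by (simp add: dual_ap_scale dual_ap_Zmap dual_ap_flat2)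
  also have "\<dots> = alpha2 (lmap b1 b2 t) (lmap b1 b2 (lmap (Bi1 b1 b2) (Bi2 b1 b2) v))"
    by (simp add: alpha_lmap)
  also have "\<dots> = alpha2 (lmap b1 b2 t) v" by (simp add: lmap_inv1[OF d])
  finally show "dual_ap (flat2 (lmap b1 b2 t)) v = dual_ap (det2 b1 b2 *\<^sub>R Zmap b1 b2 (flat2 t)) v"
    by (simp add: dual_ap_flat2)
qed

lemma omega_cscale_both: "omega q \<mu> (cscale r a) (cscale r b) = (r * r) *\<^sub>R omega q \<mu> a b"
  by (simp add: omega_def rho_cscale einner_cscale1 einner_cscale2)

lemma cscale_cscale: "cscale r (cscale r' a) = cscale (r * r') a"
  by (simp add: cscale_def fun_eq_iff)
lemma cscale_1: "cscale 1 a = a" by (simp add: cscale_def)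
lemma cscale_cadd: "cscale r (cadd a b) = cadd (cscale r a) (cscale r b)"
  by (simp add: cscale_def cadd_def fun_eq_iff algebra_simps)
lemma cscale_cdiff: "cscale r (cdiff a b) = cdiff (cscale r a) (cscale r b)"
  by (simp add: cscale_def cdiff_def fun_eq_iff algebra_simps)

definition Phi3 :: "nat \<Rightarrow> (nat \<Rightarrow> nat) \<Rightarrow> (nat \<Rightarrow> real) \<Rightarrow> real \<times> real \<Rightarrow> real \<times> real \<Rightarrow>
   (real \<times> real) \<times> (nat \<Rightarrow> complex) \<times> real \<times> (real \<times> real) \<Rightarrow> (real \<times> real) \<times> (nat \<Rightarrow> complex) \<times> real \<times> (real \<times> real)" where
  "Phi3 q \<sigma> \<epsilon> b1 b2 = (\<lambda>(z, a, s, t). ((det2 b1 b2)\<^sup>2 *\<^sub>R Zmap b1 b2 z, cscale \<bar>det2 b1 b2\<bar> (Cmap q \<sigma> \<epsilon> a),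
      det2 b1 b2 * s, lmap b1 b2 t))"

lemma dq_bracket_z:
  assumes d: "det2 b1 b2 \<noteq> 0" and s: "\<sigma> permutes {1..q}" and e: "\<forall>j. \<epsilon> j \<in> {-1, 1}"
    and r: "\<forall>j\<in>{1..q}. \<forall>t. dual_ap (\<mu>' j) (lmap b1 b2 t) = \<epsilon> j * dual_ap (\<mu> (\<sigma> j)) t"
  shows "(det2 b1 b2)\<^sup>2 *\<^sub>R Zmap b1 b2 (omega q \<mu> a a' - s' *\<^sub>R flat2 t + s0 *\<^sub>R flat2 t') =
    omega q \<mu>' (cscale \<bar>det2 b1 b2\<bar> (Cmap q \<sigma> \<epsilon> a)) (cscale \<bar>det2 b1 b2\<bar> (Cmap q \<sigma> \<epsilon> a'))
      - (det2 b1 b2 * s') *\<^sub>R flat2 (lmap b1 b2 t) + (det2 b1 b2 * s0) *\<^sub>R flat2 (lmap b1 b2 t')"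
proof -
  let ?d = "det2 b1 b2"
  have rr: "\<bar>?d\<bar> * \<bar>?d\<bar> = ?d\<^sup>2" by (simp add: power2_eq_square abs_mult_self_eq)
  have "omega q \<mu>' (cscale \<bar>?d\<bar> (Cmap q \<sigma> \<epsilon> a)) (cscale \<bar>?d\<bar> (Cmap q \<sigma> \<epsilon> a')) = ?d\<^sup>2 *\<^sub>R Zmap b1 b2 (omega q \<mu> a a')"
    by (simp add: omega_cscale_both rr Zmap_omega[OF d s e r] power2_eq_square)
  moreover have "(?d * s') *\<^sub>R flat2 (lmap b1 b2 t) = ?d\<^sup>2 *\<^sub>R Zmap b1 b2 (s' *\<^sub>R flat2 t)"
    by (simp add: flat_lmap[OF d] Zmap_scale power2_eq_square)
  moreover have "(?d * s0) *\<^sub>R flat2 (lmap b1 b2 t') = ?d\<^sup>2 *\<^sub>R Zmap b1 b2 (s0 *\<^sub>R flat2 t')"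
    by (simp add: flat_lmap[OF d] Zmap_scale power2_eq_square)
  ultimately show ?thesis by (simp add: Zmap_add Zmap_diff scaleR_add_right scaleR_diff_right)
qed


lemma dq_lie_iso:
  assumes d: "det2 b1 b2 \<noteq> 0" and s: "\<sigma> permutes {1..q}" and e: "\<forall>j. \<epsilon> j \<in> {-1, 1}"
    and r: "\<forall>j\<in>{1..q}. \<forall>t. dual_ap (\<mu>' j) (lmap b1 b2 t) = \<epsilon> j * dual_ap (\<mu> (\<sigma> j)) t"
  shows "lie_iso (dq q \<mu>) (dq q \<mu>') (Phi3 q \<sigma> \<epsilon> b1 b2)"
proof -
  let ?P = "Phi3 q \<sigma> \<epsilon> b1 b2"
  let ?d = "det2 b1 b2"
  have ad: "\<bar>?d\<bar> \<noteq> 0" "?d\<^sup>2 \<noteq> 0" using d by auto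
  have rt: "\<forall>j\<in>{1..q}. dual_ap (\<mu>' j) (lmap b1 b2 t) = \<epsilon> j * dual_ap (\<mu> (\<sigma> j)) t" for t
    using r by blast
  have inj: "inj_on ?P (car (dq q \<mu>))"
  proof (rule inj_onI)
    fix X Y assume X: "X \<in> car (dq q \<mu>)" and Y: "Y \<in> car (dq q \<mu>)" and eq: "?P X = ?P Y"
    obtain z a s0 t z' a' s' t' where XY: "X = (z, a, s0, t)" "Y = (z', a', s', t')" by (cases X, cases Y) auto
    have 1: "?d\<^sup>2 *\<^sub>R Zmap b1 b2 z = ?d\<^sup>2 *\<^sub>R Zmap b1 b2 z'"
      "cscale \<bar>?d\<bar> (Cmap q \<sigma> \<epsilon> a) = cscale \<bar>?d\<bar> (Cmap q \<sigma> \<epsilon> a')"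
      "?d * s0 = ?d * s'" "lmap b1 b2 t = lmap b1 b2 t'"
      using eq by (simp_all add: XY Phi3_def)
    have "Zmap b1 b2 z = Zmap b1 b2 z'" using 1(1) ad by simp
    then have "Zinv b1 b2 (Zmap b1 b2 z) = Zinv b1 b2 (Zmap b1 b2 z')" by simp
    then have "z = z'" by (simp add: Zinv_Zmap[OF d])
    moreover have Ceq: "Cmap q \<sigma> \<epsilon> a = Cmap q \<sigma> \<epsilon> a'"
      using arg_cong[OF 1(2), of "cscale (1 / \<bar>?d\<bar>)"] ad by (simp add: cscale_cscale cscale_1)
    have "a = a'"
    proof (rule Cmap_inj[OF s e _ _ Ceq])
      show "\<And>j. j = 0 \<or> j > q \<Longrightarrow> a j = 0" using X unfolding XY car_dq by blast
      show "\<And>j. j = 0 \<or> j > q \<Longrightarrow> a' j = 0" using Y unfolding XY car_dq by blast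
    qed
    moreover have "s0 = s'" using 1(3) d by simp
    moreover have "t = t'" using arg_cong[OF 1(4), of "lmap (Bi1 b1 b2) (Bi2 b1 b2)"] by (simp add: lmap_inv2[OF d])
    ultimately show "X = Y" by (simp add: XY)
  qed
  have img: "?P ` car (dq q \<mu>) = car (dq q \<mu>')"
  proof
    show "?P ` car (dq q \<mu>) \<subseteq> car (dq q \<mu>')"
      by (auto simp: Phi3_def car_dq Cmap_car cscale_def)
    show "car (dq q \<mu>') \<subseteq> ?P ` car (dq q \<mu>)"
    proof
      fix Y assume Y: "Y \<in> car (dq q \<mu>')"
      obtain z a s0 t where Yd: "Y = (z, a, s0, t)" by (cases Y) auto
      have a: "\<And>j. j = 0 \<or> j > q \<Longrightarrow> a j = 0" using Y unfolding Yd car_dq by blast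
      have a2: "\<And>j. j = 0 \<or> j > q \<Longrightarrow> cscale (1 / \<bar>?d\<bar>) a j = 0" using a by (simp add: cscale_def)
      have "Y = ?P (Zinv b1 b2 ((1 / ?d\<^sup>2) *\<^sub>R z), Cinv q \<sigma> \<epsilon> (cscale (1 / \<bar>?d\<bar>) a), s0 / ?d,
                lmap (Bi1 b1 b2) (Bi2 b1 b2) t)"
        using ad d by (simp add: Yd Phi3_def Zmap_Zinv[OF d] Cmap_Cinv[OF s a2] lmap_inv1[OF d] cscale_cscale cscale_1)
      moreover have "(Zinv b1 b2 ((1 / ?d\<^sup>2) *\<^sub>R z), Cinv q \<sigma> \<epsilon> (cscale (1 / \<bar>?d\<bar>) a), s0 / ?d,
                lmap (Bi1 b1 b2) (Bi2 b1 b2) t) \<in> car (dq q \<mu>)"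
        by (simp add: car_dq Cinv_car)
      ultimately show "Y \<in> ?P ` car (dq q \<mu>)" by blast
    qed
  qed
  show ?thesis unfolding lie_iso_def
  proof (intro conjI ballI allI)
    show "bij_betw ?P (car (dq q \<mu>)) (car (dq q \<mu>'))" using inj img by (simp add: bij_betw_def)
  next
    fix X Y assume "X \<in> car (dq q \<mu>)" "Y \<in> car (dq q \<mu>)"
    obtain z a s0 t z' a' s' t' where XY: "X = (z, a, s0, t)" "Y = (z', a', s', t')" by (cases X, cases Y) auto
    show "?P (vadd (dq q \<mu>) X Y) = vadd (dq q \<mu>') (?P X) (?P Y)"
      by (simp add: XY Phi3_def vadd_dq Zmap_add Cmap_cadd lmap_add cscale_cadd scaleR_add_right algebra_simps)
  next
    fix c X assume "X \<in> car (dq q \<mu>)"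
    obtain z a s0 t where XY: "X = (z, a, s0, t)" by (cases X) auto
    show "?P (vscale (dq q \<mu>) c X) = vscale (dq q \<mu>') c (?P X)"
      by (simp add: XY Phi3_def vscale_dq Zmap_scale Cmap_cscale lmap_scale cscale_cscale mult.commute)
  next
    fix X Y assume "X \<in> car (dq q \<mu>)" "Y \<in> car (dq q \<mu>)"
    obtain z a s0 t z' a' s' t' where XY: "X = (z, a, s0, t)" "Y = (z', a', s', t')" by (cases X, cases Y) auto
    show "?P (brk (dq q \<mu>) X Y) = brk (dq q \<mu>') (?P X) (?P Y)"
      by (simp add: XY Phi3_def brk_dq dq_bracket_z[OF d s e r] Cmap_cdiff Cmap_rho[OF s e rt]
          cscale_cdiff rho_cscale alpha_lmap)
  qed
qed


lemma vecS_eq: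
  assumes s: "\<sigma> permutes {1..q}"
  shows "(\<lambda>j. \<epsilon> j * vecm q \<mu> c (\<sigma> j)) j = (if 1 \<le> j \<and> j \<le> q then \<epsilon> j * dual_ap (\<mu> (\<sigma> j)) c else 0)"
proof (cases "j \<in> {1..q}")
  case True
  then have "\<sigma> j \<in> {1..q}" using permutes_in_image[OF s] by simp
  then show ?thesis using True by (simp add: vecm_def)
next
  case False
  then have "\<sigma> j = j" using permutes_not_in[OF s] by simp
  then show ?thesis using False by (auto simp: vecm_def)
qed

lemma lin_from_basis:
  assumes "\<forall>j\<in>{1..q}. dual_ap (M j) p1 = dual_ap (N j) (1, 0)"
    and "\<forall>j\<in>{1..q}. dual_ap (M j) p2 = dual_ap (N j) (0, 1)"
  shows "\<forall>j\<in>{1..q}. \<forall>t. dual_ap (M j) (lmap p1 p2 t) = dual_ap (N j) t"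
  using assms by (simp add: dual_ap_lmap) (simp add: dual_ap_def)

lemma partc_if:
  assumes \<mu>nz: "\<forall>j\<in>{1..q}. \<mu> j \<noteq> 0" and \<mu>'nz: "\<forall>j\<in>{1..q}. \<mu>' j \<noteq> 0"
    and eq: "equiv_signed_perm q (mu_image q \<mu>) (mu_image q \<mu>')"
  shows "lie_isomorphic (dq q \<mu>) (dq q \<mu>')"
proof -
  obtain \<sigma> \<epsilon> where s: "\<sigma> permutes {1..q}" and e: "\<forall>j. \<epsilon> j \<in> {-1, 1::real}"
    and im: "(\<lambda>v j. \<epsilon> j * v (\<sigma> j)) ` range (vecm q \<mu>) = range (vecm q \<mu>')"
    using eq unfolding equiv_signed_perm_def mu_image_vecm by blast
  define F where "F j = \<epsilon> j *\<^sub>R \<mu> (\<sigma> j)" for j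
  have vS: "(\<lambda>j. \<epsilon> j * vecm q \<mu> c (\<sigma> j)) = (\<lambda>j. if 1 \<le> j \<and> j \<le> q then dual_ap (F j) c else 0)" for c
    using vecS_eq[OF s] by (simp add: fun_eq_iff F_def dual_ap_scale)
  have sub: "\<exists>p. \<forall>j\<in>{1..q}. dual_ap (\<mu>' j) p = dual_ap (F j) c" for c
  proof -
    have "(\<lambda>j. \<epsilon> j * vecm q \<mu> c (\<sigma> j)) \<in> range (vecm q \<mu>')" using im by blast
    then obtain p where pe: "(\<lambda>j. \<epsilon> j * vecm q \<mu> c (\<sigma> j)) = vecm q \<mu>' p" by blast
    have "\<forall>j\<in>{1..q}. dual_ap (\<mu>' j) p = dual_ap (F j) c"
    proof
      fix j assume j: "j \<in> {1..q}"
      from fun_cong[OF pe[unfolded vS], of j] show "dual_ap (\<mu>' j) p = dual_ap (F j) c"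
        using j by (simp add: vecm_def)
    qed
    then show ?thesis by blast
  qed
  have sup: "\<exists>c. \<forall>j\<in>{1..q}. dual_ap (\<mu>' j) p = dual_ap (F j) c" for p
  proof -
    have "vecm q \<mu>' p \<in> (\<lambda>v j. \<epsilon> j * v (\<sigma> j)) ` range (vecm q \<mu>)" using im by blast
    then obtain c where pe: "vecm q \<mu>' p = (\<lambda>j. \<epsilon> j * vecm q \<mu> c (\<sigma> j))" by blast
    have "\<forall>j\<in>{1..q}. dual_ap (\<mu>' j) p = dual_ap (F j) c"
    proof
      fix j assume j: "j \<in> {1..q}"
      from fun_cong[OF pe[unfolded vS], of j] show "dual_ap (\<mu>' j) p = dual_ap (F j) c"
        using j by (simp add: vecm_def)
    qed
    then show ?thesis by blast
  qed
  obtain p1 p2 where p1: "\<forall>j\<in>{1..q}. dual_ap (\<mu>' j) p1 = dual_ap (F j) (1,0)"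
    and p2: "\<forall>j\<in>{1..q}. dual_ap (\<mu>' j) p2 = dual_ap (F j) (0,1)" using sub by metis
  obtain c1 c2 where c1: "\<forall>j\<in>{1..q}. dual_ap (\<mu>' j) (1,0) = dual_ap (F j) c1"
    and c2: "\<forall>j\<in>{1..q}. dual_ap (\<mu>' j) (0,1) = dual_ap (F j) c2" using sup by metis
  have Q: "\<forall>j\<in>{1..q}. \<forall>t. dual_ap (\<mu>' j) (lmap p1 p2 t) = dual_ap (F j) t"
    by (rule lin_from_basis[OF p1 p2])
  have P: "\<forall>j\<in>{1..q}. \<forall>t. dual_ap (F j) (lmap c1 c2 t) = 1 * dual_ap (\<mu>' (id j)) t"
    using lin_from_basis[of q F c1 "\<mu>'" c2] c1 c2 by simp
  have Fnz: "\<forall>j\<in>{1..q}. F j \<noteq> 0"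
  proof
    fix j assume j: "j \<in> {1..q}"
    have "\<sigma> j \<in> {1..q}" using permutes_in_image[OF s] j by simp
    then have "\<mu> (\<sigma> j) \<noteq> 0" using \<mu>nz by blast
    moreover have "\<epsilon> j \<noteq> 0" using e[rule_format, of j] by auto
    ultimately show "F j \<noteq> 0" by (simp add: F_def)
  qed
  have "\<exists>b1 b2. det2 b1 b2 \<noteq> 0 \<and> (\<forall>j\<in>{1..q}. \<forall>t. dual_ap (\<mu>' j) (lmap b1 b2 t) = dual_ap (F j) t)"
  proof (rule fix_inv[OF Fnz \<mu>'nz Q])
    fix w assume w: "w \<noteq> 0" "\<forall>j\<in>{1..q}. dual_ap (F j) w = 0"
    show "\<exists>w'. w' \<noteq> 0 \<and> (\<forall>j\<in>{1..q}. dual_ap (\<mu>' j) w' = 0)"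
      using rank_lemma[OF P _ permutes_id w] by simp
  qed
  then obtain b1 b2 where b: "det2 b1 b2 \<noteq> 0"
    and rb: "\<forall>j\<in>{1..q}. \<forall>t. dual_ap (\<mu>' j) (lmap b1 b2 t) = dual_ap (F j) t" by blast
  have rb2: "\<forall>j\<in>{1..q}. \<forall>t. dual_ap (\<mu>' j) (lmap b1 b2 t) = \<epsilon> j * dual_ap (\<mu> (\<sigma> j)) t"
    using rb by (simp add: F_def dual_ap_scale)
  show ?thesis unfolding lie_isomorphic_def using dq_lie_iso[OF b s e rb2] by blast
qed

lemma partc:
  assumes \<mu>nz: "\<forall>j\<in>{1..q}. \<mu> j \<noteq> 0" and \<mu>'nz: "\<forall>j\<in>{1..q}. \<mu>' j \<noteq> 0"
  shows "lie_isomorphic (dq q \<mu>) (dq q \<mu>') \<longleftrightarrow> equiv_signed_perm q (mu_image q \<mu>) (mu_image q \<mu>')"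
proof
  assume "lie_isomorphic (dq q \<mu>) (dq q \<mu>')"
  then obtain f where f: "lie_iso (dq q \<mu>) (dq q \<mu>') f" by (auto simp: lie_isomorphic_def)
  obtain \<sigma> \<epsilon> where s: "\<sigma> permutes {1..q}" and e: "\<forall>j. \<epsilon> j \<in> {-1, 1::real}"
    and r: "\<forall>j\<in>{1..q}. \<forall>t. dual_ap (\<mu>' j) (lmap (dqT f (1,0)) (dqT f (0,1)) t) = \<epsilon> j * dual_ap (\<mu> (\<sigma> j)) t"
    using dq_data[OF f \<mu>nz] by blast
  show "equiv_signed_perm q (mu_image q \<mu>) (mu_image q \<mu>')"
    by (rule image_transfer[OF s e dq_det[OF f \<mu>'nz] r])
next
  assume "equiv_signed_perm q (mu_image q \<mu>) (mu_image q \<mu>')"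
  then show "lie_isomorphic (dq q \<mu>) (dq q \<mu>')" by (rule partc_if[OF \<mu>nz \<mu>'nz])
qed


lemma L_cadd: "osc1_L q \<mu> (cadd a b) = cadd (osc1_L q \<mu> a) (osc1_L q \<mu> b)"
  by (auto simp: osc1_L_def cadd_def fun_eq_iff algebra_simps)
lemma L_cscale: "osc1_L q \<mu> (cscale c a) = cscale c (osc1_L q \<mu> a)"
  by (auto simp: osc1_L_def cscale_def fun_eq_iff algebra_simps)
lemma L_cdiff: "osc1_L q \<mu> (cdiff a b) = cdiff (osc1_L q \<mu> a) (osc1_L q \<mu> b)"
  by (auto simp: osc1_L_def cdiff_def fun_eq_iff algebra_simps)
lemma L_zero[simp]: "osc1_L q \<mu> (\<lambda>j. 0) = (\<lambda>j. 0)"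
  by (auto simp: osc1_L_def fun_eq_iff)

lemma iim: "\<i> * (x * (\<i> * y)) = - (x * y)"
  by (metis complex_i_mult_minus mult.left_commute)

lemma LL: "osc1_L q \<mu> (osc1_L q \<mu> a) j = (if j = 0 then a 0 else if j \<le> q then - complex_of_real ((\<mu> j)\<^sup>2) * a j else 0)"
proof -
  have "\<i> * cnj (\<i> * cnj (a 0)) = a 0" by simp
  then show ?thesis by (auto simp: osc1_L_def power2_eq_square iim mult.assoc)
qed

lemma oi_cadd2: "osc1_inner q c (cadd a b) = osc1_inner q c a + osc1_inner q c b"
  using einner_cadd2[of q c a b] by (simp add: osc1_inner_def einner_cadd2 cadd_def algebra_simps)
lemma oi_cscale2: "osc1_inner q c (cscale r a) = r * osc1_inner q c a"
  using einner_cscale2[of q c r a] by (simp add: osc1_inner_def einner_cscale2 cscale_def algebra_simps)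
lemma oi_cdiff2: "osc1_inner q c (cdiff a b) = osc1_inner q c a - osc1_inner q c b"
  using einner_cdiff2[of q c a b] by (simp add: osc1_inner_def einner_cdiff2 cdiff_def algebra_simps)
lemma oi_zero1[simp]: "osc1_inner q (\<lambda>j. 0) b = 0"
  by (simp add: osc1_inner_def einner_def)

lemma car_osc1: "(z, a, t) \<in> car (osc1 q \<mu>) \<longleftrightarrow> (\<forall>j>q. a j = 0)"
  by (simp add: osc1_def)
lemma brk_osc1: "brk (osc1 q \<mu>) (z, a, t) (z', a', t') =
   (osc1_inner q (osc1_L q \<mu> a) a', cdiff (cscale t (osc1_L q \<mu> a')) (cscale t' (osc1_L q \<mu> a)), 0)"
  by (simp add: osc1_def)
lemma vadd_osc1: "vadd (osc1 q \<mu>) (z, a, t) (z', a', t') = (z + z', cadd a a', t + t')"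
  by (simp add: osc1_def)
lemma vscale_osc1: "vscale (osc1 q \<mu>) c (z, a, t) = (c * z, cscale c a, c * t)"
  by (simp add: osc1_def)
lemma frm_osc1: "frm (osc1 q \<mu>) (z, a, t) (z', a', t') = z * t' + z' * t + osc1_inner q a a'"
  by (simp add: osc1_def)

lemma closed_osc1: "closed_mla (osc1 q \<mu>)"
  unfolding closed_mla_def
  by (auto simp: osc1_def cadd_def cscale_def cdiff_def osc1_L_def)

definition J1 :: "nat \<Rightarrow> (nat \<Rightarrow> real) \<Rightarrow> real \<Rightarrow> real \<Rightarrow> nat set" where
  "J1 q \<mu> t k = {j. j = 0 \<and> t\<^sup>2 = k} \<union> {j\<in>{1..q}. - (t\<^sup>2 * (\<mu> j)\<^sup>2) = k}"

lemma J1_fin: "finite (J1 q \<mu> t k)"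
proof -
  have "J1 q \<mu> t k \<subseteq> {0..q}" by (auto simp: J1_def)
  then show ?thesis by (rule finite_subset) simp
qed

lemma LL_SJ:
  assumes "a \<in> SJ (J1 q \<mu> t k)"
  shows "cscale t (osc1_L q \<mu> (cscale t (osc1_L q \<mu> a))) = cscale k a"
proof
  fix j
  have LL': "osc1_L q \<mu> (cscale t (osc1_L q \<mu> a)) j = complex_of_real t * osc1_L q \<mu> (osc1_L q \<mu> a) j"
    by (simp only: L_cscale) (simp add: cscale_def)
  show "cscale t (osc1_L q \<mu> (cscale t (osc1_L q \<mu> a))) j = cscale k a j"
  proof (cases "j \<in> J1 q \<mu> t k")
    case True
    then consider "j = 0" "t\<^sup>2 = k" | "1 \<le> j" "j \<le> q" "- (t\<^sup>2 * (\<mu> j)\<^sup>2) = k" by (auto simp: J1_def)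
    then show ?thesis
    proof cases
      case 1 then show ?thesis using LL' by (simp add: cscale_def LL power2_eq_square flip: of_real_mult)
    next
      case 2
      then have "complex_of_real k = - (complex_of_real t * complex_of_real t * complex_of_real ((\<mu> j)\<^sup>2))"
        by (simp flip: of_real_mult of_real_minus add: power2_eq_square)
      then show ?thesis using 2 LL' by (simp add: cscale_def LL)
    qed
  next
    case False
    then have aj: "a j = 0" using assms by (simp add: SJ_def)
    show ?thesis using LL' aj by (cases "j = 0") (simp_all add: cscale_def LL)
  qed
qed

lemma LL_eig:
  assumes c: "\<And>j. j > q \<Longrightarrow> a j = 0"
    and e: "cscale t (osc1_L q \<mu> (cscale t (osc1_L q \<mu> a))) = cscale k a"
  shows "a \<in> SJ (J1 q \<mu> t k)"
  unfolding SJ_def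
proof (intro CollectI allI impI)
  fix j assume j: "j \<notin> J1 q \<mu> t k"
  have ej: "complex_of_real t * (complex_of_real t * osc1_L q \<mu> (osc1_L q \<mu> a) j) = complex_of_real k * a j"
    using fun_cong[OF e, of j] by (simp only: L_cscale) (simp add: cscale_def)
  show "a j = 0"
  proof (cases "j = 0")
    case True
    then have ne: "t\<^sup>2 \<noteq> k" using j by (simp add: J1_def)
    have "(complex_of_real (t\<^sup>2) - complex_of_real k) * a j = 0"
      using ej True by (simp add: LL power2_eq_square algebra_simps)
    moreover have "complex_of_real (t\<^sup>2) - complex_of_real k \<noteq> 0" using ne by (metis of_real_eq_iff right_minus_eq)
    ultimately show ?thesis by simp
  next
    case False
    show ?thesis
    proof (cases "j \<le> q")
      case True
      then have ne: "- (t\<^sup>2 * (\<mu> j)\<^sup>2) \<noteq> k" using j False by (simp add: J1_def)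
      have "(complex_of_real (- (t\<^sup>2 * (\<mu> j)\<^sup>2)) - complex_of_real k) * a j = 0"
        using ej True False by (simp add: LL power2_eq_square algebra_simps)
      moreover have "complex_of_real (- (t\<^sup>2 * (\<mu> j)\<^sup>2)) - complex_of_real k \<noteq> 0" using ne by (metis of_real_eq_iff right_minus_eq)
      ultimately show ?thesis by simp
    next
      case False then show ?thesis using c by simp
    qed
  qed
qed


lemma cscale0[simp]: "cscale 0 a = (\<lambda>j. 0)" by (simp add: cscale_def)
lemma cdiff_zero'[simp]: "cdiff a 0 = a" by (simp add: cdiff_def)

lemma osc1_kern_in:
  assumes k: "k \<noteq> 0" and a': "a' \<in> SJ (J1 q \<mu> t k)"
  shows "((1/k) * osc1_inner q (osc1_L q \<mu> a) (cscale t (osc1_L q \<mu> a')), a', 0::real) \<in> KS (osc1 q \<mu>) (z, a, t) k"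
proof -
  have c: "((1/k) * osc1_inner q (osc1_L q \<mu> a) (cscale t (osc1_L q \<mu> a')), a', 0::real) \<in> car (osc1 q \<mu>)"
    using a' by (auto simp: car_osc1 SJ_def J1_def)
  show ?thesis unfolding KS_def
    using c k LL_SJ[OF a'] by (simp add: brk_osc1 vscale_osc1)
qed

lemma osc1_kern_out:
  assumes k: "k \<noteq> 0" and Y: "Y \<in> KS (osc1 q \<mu>) (z, a, t) k"
  shows "fst (snd Y) \<in> SJ (J1 q \<mu> t k) \<and> snd (snd Y) = 0 \<and>
         fst Y = (1/k) * osc1_inner q (osc1_L q \<mu> a) (cscale t (osc1_L q \<mu> (fst (snd Y))))"
proof -
  obtain z' a' t' where Yd: "Y = (z', a', t')" by (cases Y) auto
  have Yc: "(z', a', t') \<in> car (osc1 q \<mu>)" using Y by (simp add: KS_def Yd)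
  have c: "\<And>j. j > q \<Longrightarrow> a' j = 0" using Yc unfolding car_osc1 by blast
  have e: "brk (osc1 q \<mu>) (z, a, t) (brk (osc1 q \<mu>) (z, a, t) Y) = vscale (osc1 q \<mu>) k Y"
    using Y by (simp add: KS_def)
  then have "0 = k * t'" by (simp add: Yd brk_osc1 vscale_osc1)
  then have t0: "t' = 0" using k by simp
  have e2: "cscale t (osc1_L q \<mu> (cscale t (osc1_L q \<mu> a'))) = cscale k a'"
    using e t0 by (simp add: Yd brk_osc1 vscale_osc1)
  have e3: "osc1_inner q (osc1_L q \<mu> a) (cscale t (osc1_L q \<mu> a')) = k * z'"
    using e t0 by (simp add: Yd brk_osc1 vscale_osc1)
  have "z' = (1/k) * osc1_inner q (osc1_L q \<mu> a) (cscale t (osc1_L q \<mu> a'))" using e3 k by simp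
  then show ?thesis using LL_eig[OF c e2] t0 by (simp add: Yd)
qed

lemma osc1_count_le:
  assumes f: "lie_iso (osc1 q \<mu>) (osc1 q \<mu>') f" and X: "(z, a, t) \<in> car (osc1 q \<mu>)"
    and fX: "f (z, a, t) = (z2, a2, t2)" and k: "k \<noteq> 0"
  shows "card (J1 q \<mu> t k) \<le> card (J1 q \<mu>' t2 k)"
proof (rule dim_transfer[OF f closed_osc1 X J1_fin J1_fin,
      where k = "k" and r = "\<lambda>a'. ((1/k) * osc1_inner q (osc1_L q \<mu> a) (cscale t (osc1_L q \<mu> a')), a', 0)"
      and p = "\<lambda>Y. fst (snd Y)"])
  fix a' assume "a' \<in> SJ (J1 q \<mu> t k)"
  then show "((1/k) * osc1_inner q (osc1_L q \<mu> a) (cscale t (osc1_L q \<mu> a')), a', 0) \<in> KS (osc1 q \<mu>) (z, a, t) k"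
    using osc1_kern_in[OF k] by blast
next
  fix a1 b1
  show "((1/k) * osc1_inner q (osc1_L q \<mu> a) (cscale t (osc1_L q \<mu> (cadd a1 b1))), cadd a1 b1, 0) =
    vadd (osc1 q \<mu>) ((1/k) * osc1_inner q (osc1_L q \<mu> a) (cscale t (osc1_L q \<mu> a1)), a1, 0)
      ((1/k) * osc1_inner q (osc1_L q \<mu> a) (cscale t (osc1_L q \<mu> b1)), b1, 0)"
    by (simp add: vadd_osc1 L_cadd cscale_cadd oi_cadd2 algebra_simps)
next
  fix c a1
  show "((1/k) * osc1_inner q (osc1_L q \<mu> a) (cscale t (osc1_L q \<mu> (cscale c a1))), cscale c a1, 0) =
    vscale (osc1 q \<mu>) c ((1/k) * osc1_inner q (osc1_L q \<mu> a) (cscale t (osc1_L q \<mu> a1)), a1, 0)"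
    by (simp add: vscale_osc1 L_cscale cscale_cscale oi_cscale2 mult.commute)
next
  show "inj_on (\<lambda>a'. ((1/k) * osc1_inner q (osc1_L q \<mu> a) (cscale t (osc1_L q \<mu> a')), a', 0::real)) (SJ (J1 q \<mu> t k))"
    by (auto simp: inj_on_def)
next
  fix Y assume "Y \<in> KS (osc1 q \<mu>') (f (z, a, t)) k"
  then show "fst (snd Y) \<in> SJ (J1 q \<mu>' t2 k)" using osc1_kern_out[OF k] fX by fastforce
next
  show "inj_on (\<lambda>Y. fst (snd Y)) (KS (osc1 q \<mu>') (f (z, a, t)) k)"
  proof (rule inj_onI)
    fix Y Z assume "Y \<in> KS (osc1 q \<mu>') (f (z, a, t)) k" "Z \<in> KS (osc1 q \<mu>') (f (z, a, t)) k"
      "fst (snd Y) = fst (snd Z)"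
    then show "Y = Z" using osc1_kern_out[OF k, of Y q \<mu>' z2 a2 t2] osc1_kern_out[OF k, of Z q \<mu>' z2 a2 t2] fX
      by (metis prod.collapse)
  qed
next
  fix Y Z :: "real \<times> (nat \<Rightarrow> complex) \<times> real"
  show "fst (snd (vadd (osc1 q \<mu>') Y Z)) = cadd (fst (snd Y)) (fst (snd Z))"
    by (cases Y; cases Z) (simp add: vadd_osc1)
next
  fix c and Y :: "real \<times> (nat \<Rightarrow> complex) \<times> real"
  show "fst (snd (vscale (osc1 q \<mu>') c Y)) = cscale c (fst (snd Y))"
    by (cases Y) (simp add: vscale_osc1)
qed

lemma osc1_count_eq:
  assumes f: "lie_iso (osc1 q \<mu>) (osc1 q \<mu>') f" and X: "(z, a, t) \<in> car (osc1 q \<mu>)"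
    and fX: "f (z, a, t) = (z2, a2, t2)" and k: "k \<noteq> 0"
  shows "card (J1 q \<mu> t k) = card (J1 q \<mu>' t2 k)"
proof -
  have g: "lie_iso (osc1 q \<mu>') (osc1 q \<mu>) (inv_into (car (osc1 q \<mu>)) f)"
    by (rule lie_iso_inv[OF f closed_osc1])
  have fc: "(z2, a2, t2) \<in> car (osc1 q \<mu>')" using f X fX by (metis lie_iso_def bij_betwE)
  have gX: "inv_into (car (osc1 q \<mu>)) f (z2, a2, t2) = (z, a, t)"
    using lie_iso_inv_app[OF f X] fX by simp
  show ?thesis using osc1_count_le[OF f X fX k] osc1_count_le[OF g fc gX k] by simp
qed


lemma osc1_data:
  assumes f: "lie_iso (osc1 q \<mu>) (osc1 q \<mu>') f" and \<mu>nz: "\<forall>j\<in>{1..q}. \<mu> j \<noteq> 0"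
  shows "\<exists>\<sigma> \<epsilon>. \<sigma> permutes {1..q} \<and> (\<forall>j. \<epsilon> j \<in> {-1, 1::real}) \<and> (\<forall>j\<in>{1..q}. \<mu>' j = \<epsilon> j * \<mu> (\<sigma> j))"
proof -
  define X where "X = (0::real, (\<lambda>j::nat. 0::complex), 1::real)"
  have Xc: "X \<in> car (osc1 q \<mu>)" by (simp add: X_def car_osc1)
  obtain z2 a2 T where fX: "f X = (z2, a2, T)" by (cases "f X") auto
  have cnt: "card (J1 q \<mu> 1 k) = card (J1 q \<mu>' T k)" if "k \<noteq> 0" for k
    using osc1_count_eq[OF f Xc[unfolded X_def] fX[unfolded X_def] that] .
  have "J1 q \<mu> 1 1 = {0}" by (auto simp: J1_def) (smt (verit) zero_le_power2)
  then have c1: "card (J1 q \<mu>' T 1) = 1" using cnt[of 1] by simp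
  have T: "T\<^sup>2 = 1"
  proof (rule ccontr)
    assume "T\<^sup>2 \<noteq> 1"
    moreover have "\<not> (- (T\<^sup>2 * (\<mu>' j)\<^sup>2) = 1)" for j
      by (smt (verit) zero_le_power2 zero_le_mult_iff)
    ultimately have "J1 q \<mu>' T 1 = {}" by (auto simp: J1_def)
    then show False using c1 by simp
  qed
  have cntl: "card {j\<in>{1..q}. (\<mu> j)\<^sup>2 = l} = card {j\<in>{1..q}. (\<mu>' j)\<^sup>2 = l}" if l: "l > 0" for l
  proof -
    have "J1 q \<mu> 1 (- l) = {j\<in>{1..q}. (\<mu> j)\<^sup>2 = l}" using l by (auto simp: J1_def)
    moreover have "J1 q \<mu>' T (- l) = {j\<in>{1..q}. (\<mu>' j)\<^sup>2 = l}" using l T by (auto simp: J1_def)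
    ultimately show ?thesis using cnt[of "- l"] l by simp
  qed
  define F where "F j = (\<mu> j, 0::real)" for j
  define G where "G j = (\<mu>' j, 0::real)" for j
  have Fnz: "\<forall>j\<in>{1..q}. F j \<noteq> 0" using \<mu>nz by (simp add: F_def zero_prod_def)
  have cntF: "card {j\<in>{1..q}. (dual_ap (F j) t)\<^sup>2 = l} = card {j\<in>{1..q}. (dual_ap (G j) t)\<^sup>2 = l}"
    if l: "l > 0" for t l
  proof (cases "fst t = 0")
    case True
    then show ?thesis using l by (simp add: F_def G_def dual_ap_def)
  next
    case False
    have "(x * fst t)\<^sup>2 = l \<longleftrightarrow> x\<^sup>2 = l / (fst t)\<^sup>2" for x
      using False by (auto simp: power_mult_distrib field_simps)
    then have "{j\<in>{1..q}. (dual_ap (F j) t)\<^sup>2 = l} = {j\<in>{1..q}. (\<mu> j)\<^sup>2 = l / (fst t)\<^sup>2}"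
      "{j\<in>{1..q}. (dual_ap (G j) t)\<^sup>2 = l} = {j\<in>{1..q}. (\<mu>' j)\<^sup>2 = l / (fst t)\<^sup>2}"
      by (simp_all add: F_def G_def dual_ap_def)
    moreover have "l / (fst t)\<^sup>2 > 0" using l False by simp
    ultimately show ?thesis using cntl by simp
  qed
  obtain \<sigma> \<epsilon> where s: "\<sigma> permutes {1..q}" "\<forall>j. \<epsilon> j \<in> {-1, 1::real}" "\<forall>j\<in>{1..q}. G j = \<epsilon> j *\<^sub>R F (\<sigma> j)"
    using forms_match[OF Fnz cntF] by blast
  have "\<forall>j\<in>{1..q}. \<mu>' j = \<epsilon> j * \<mu> (\<sigma> j)" using s(3) by (simp add: F_def G_def)
  then show ?thesis using s(1,2) by blast
qed


definition C1 :: "nat \<Rightarrow> (nat \<Rightarrow> nat) \<Rightarrow> (nat \<Rightarrow> real) \<Rightarrow> (nat \<Rightarrow> complex) \<Rightarrow> nat \<Rightarrow> complex" where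
  "C1 q \<sigma> \<epsilon> a = (\<lambda>j. if j = 0 then a 0 else Cmap q \<sigma> \<epsilon> a j)"
definition C1i :: "nat \<Rightarrow> (nat \<Rightarrow> nat) \<Rightarrow> (nat \<Rightarrow> real) \<Rightarrow> (nat \<Rightarrow> complex) \<Rightarrow> nat \<Rightarrow> complex" where
  "C1i q \<sigma> \<epsilon> a = (\<lambda>j. if j = 0 then a 0 else Cinv q \<sigma> \<epsilon> a j)"

lemma Cmap_cong:
  assumes s: "\<sigma> permutes {1..q}" and "\<forall>k\<in>{1..q}. a k = b k"
  shows "Cmap q \<sigma> \<epsilon> a = Cmap q \<sigma> \<epsilon> b"
proof
  fix j show "Cmap q \<sigma> \<epsilon> a j = Cmap q \<sigma> \<epsilon> b j"
  proof (cases "j \<in> {1..q}")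
    case True
    then have "\<sigma> j \<in> {1..q}" using permutes_in_image[OF s] by simp
    then show ?thesis using assms(2) by (simp add: Cmap_def)
  next
    case False then show ?thesis by (auto simp: Cmap_def)
  qed
qed

lemma Cinv_cong:
  assumes s: "\<sigma> permutes {1..q}" and "\<forall>k\<in>{1..q}. a k = b k"
  shows "Cinv q \<sigma> \<epsilon> a = Cinv q \<sigma> \<epsilon> b"
proof
  fix j show "Cinv q \<sigma> \<epsilon> a j = Cinv q \<sigma> \<epsilon> b j"
  proof (cases "j \<in> {1..q}")
    case True
    then have "inv \<sigma> j \<in> {1..q}" using permutes_in_image[OF permutes_inv[OF s]] by simp
    then show ?thesis using assms(2) by (simp add: Cinv_def)
  next
    case False then show ?thesis by (auto simp: Cinv_def)
  qed
qed

lemma C1_L: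
  assumes s: "\<sigma> permutes {1..q}" and e: "\<forall>j. \<epsilon> j \<in> {-1, 1}"
    and r: "\<forall>j\<in>{1..q}. \<mu>' j = \<epsilon> j * \<mu> (\<sigma> j)"
  shows "C1 q \<sigma> \<epsilon> (osc1_L q \<mu> a) = osc1_L q \<mu>' (C1 q \<sigma> \<epsilon> a)"
proof
  fix j
  show "C1 q \<sigma> \<epsilon> (osc1_L q \<mu> a) j = osc1_L q \<mu>' (C1 q \<sigma> \<epsilon> a) j"
  proof (cases "j \<in> {1..q}")
    case True
    then have sj: "1 \<le> \<sigma> j \<and> \<sigma> j \<le> q" using permutes_in_image[OF s, of j] by simp
    have rj: "\<mu>' j = \<epsilon> j * \<mu> (\<sigma> j)" using r True by simp
    show ?thesis
    proof (cases "\<epsilon> j = 1")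
      case True
      then show ?thesis using \<open>j \<in> {1..q}\<close> sj rj by (simp add: C1_def Cmap_def osc1_L_def)
    next
      case False
      then have "\<epsilon> j = -1" using e by auto
      then show ?thesis using \<open>j \<in> {1..q}\<close> sj rj by (simp add: C1_def Cmap_def osc1_L_def)
    qed
  next
    case False
    then show ?thesis by (auto simp: C1_def Cmap_def osc1_L_def)
  qed
qed

lemma C1_cadd: "C1 q \<sigma> \<epsilon> (cadd a b) = cadd (C1 q \<sigma> \<epsilon> a) (C1 q \<sigma> \<epsilon> b)"
  using Cmap_cadd[of q \<sigma> \<epsilon> a b] by (auto simp: C1_def cadd_def fun_eq_iff)
lemma C1_cscale: "C1 q \<sigma> \<epsilon> (cscale c a) = cscale c (C1 q \<sigma> \<epsilon> a)"
  using Cmap_cscale[of q \<sigma> \<epsilon> c a] by (auto simp: C1_def cscale_def fun_eq_iff)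
lemma C1_cdiff: "C1 q \<sigma> \<epsilon> (cdiff a b) = cdiff (C1 q \<sigma> \<epsilon> a) (C1 q \<sigma> \<epsilon> b)"
  using Cmap_cdiff[of q \<sigma> \<epsilon> a b] by (auto simp: C1_def cdiff_def fun_eq_iff)

lemma C1_inner:
  assumes s: "\<sigma> permutes {1..q}"
  shows "osc1_inner q (C1 q \<sigma> \<epsilon> a) (C1 q \<sigma> \<epsilon> b) = osc1_inner q a b"
proof -
  have "einner q (C1 q \<sigma> \<epsilon> a) (C1 q \<sigma> \<epsilon> b) = einner q (Cmap q \<sigma> \<epsilon> a) (Cmap q \<sigma> \<epsilon> b)"
    unfolding einner_def by (rule sum.cong) (auto simp: C1_def)
  then show ?thesis by (simp add: osc1_inner_def Cmap_einner[OF s] C1_def)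
qed

definition Phi1 :: "nat \<Rightarrow> (nat \<Rightarrow> nat) \<Rightarrow> (nat \<Rightarrow> real) \<Rightarrow>
   real \<times> (nat \<Rightarrow> complex) \<times> real \<Rightarrow> real \<times> (nat \<Rightarrow> complex) \<times> real" where
  "Phi1 q \<sigma> \<epsilon> = (\<lambda>(z, a, t). (z, C1 q \<sigma> \<epsilon> a, t))"

lemma osc1_metric_iso:
  assumes s: "\<sigma> permutes {1..q}" and e: "\<forall>j. \<epsilon> j \<in> {-1, 1}"
    and r: "\<forall>j\<in>{1..q}. \<mu>' j = \<epsilon> j * \<mu> (\<sigma> j)"
  shows "metric_lie_iso (osc1 q \<mu>) (osc1 q \<mu>') (Phi1 q \<sigma> \<epsilon>)"
proof -
  let ?P = "Phi1 q \<sigma> \<epsilon>"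
  have inj: "inj_on ?P (car (osc1 q \<mu>))"
  proof (rule inj_onI)
    fix X Y assume X: "X \<in> car (osc1 q \<mu>)" and Y: "Y \<in> car (osc1 q \<mu>)" and eq: "?P X = ?P Y"
    obtain z a t z' a' t' where XY: "X = (z, a, t)" "Y = (z', a', t')" by (cases X, cases Y) auto
    have 1: "z = z'" "C1 q \<sigma> \<epsilon> a = C1 q \<sigma> \<epsilon> a'" "t = t'"
      using eq by (simp_all add: XY Phi1_def)
    have a0: "a 0 = a' 0" using fun_cong[OF 1(2), of 0] by (simp add: C1_def)
    have "Cmap q \<sigma> \<epsilon> a = Cmap q \<sigma> \<epsilon> a'"
    proof
      fix j show "Cmap q \<sigma> \<epsilon> a j = Cmap q \<sigma> \<epsilon> a' j"
        using fun_cong[OF 1(2), of j] by (cases "j = 0") (simp_all add: C1_def Cmap_def)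
    qed
    moreover have "Cmap q \<sigma> \<epsilon> a = Cmap q \<sigma> \<epsilon> (a(0 := 0))" "Cmap q \<sigma> \<epsilon> a' = Cmap q \<sigma> \<epsilon> (a'(0 := 0))"
      by (rule Cmap_cong[OF s], simp)+
    ultimately have "Cmap q \<sigma> \<epsilon> (a(0 := 0)) = Cmap q \<sigma> \<epsilon> (a'(0 := 0))" by simp
    then have "a(0 := 0) = a'(0 := 0)"
    proof (rule Cmap_inj[OF s e, rotated 2])
      show "\<And>j. j = 0 \<or> j > q \<Longrightarrow> (a(0 := 0)) j = 0" using X unfolding XY car_osc1 by auto
      show "\<And>j. j = 0 \<or> j > q \<Longrightarrow> (a'(0 := 0)) j = 0" using Y unfolding XY car_osc1 by auto
    qed
    then have "a = a'" using a0 by (metis fun_upd_triv fun_upd_upd)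
    then show "X = Y" using 1 by (simp add: XY)
  qed
  have img: "?P ` car (osc1 q \<mu>) = car (osc1 q \<mu>')"
  proof
    show "?P ` car (osc1 q \<mu>) \<subseteq> car (osc1 q \<mu>')"
      by (auto simp: Phi1_def car_osc1 C1_def Cmap_car)
    show "car (osc1 q \<mu>') \<subseteq> ?P ` car (osc1 q \<mu>)"
    proof
      fix Y assume Y: "Y \<in> car (osc1 q \<mu>')"
      obtain z a t where Yd: "Y = (z, a, t)" by (cases Y) auto
      have a: "\<And>j. j = 0 \<or> j > q \<Longrightarrow> (a(0 := 0)) j = 0" using Y unfolding Yd car_osc1 by auto
      have "C1 q \<sigma> \<epsilon> (C1i q \<sigma> \<epsilon> a) = a"
      proof
        fix j
        have "Cmap q \<sigma> \<epsilon> (C1i q \<sigma> \<epsilon> a) = Cmap q \<sigma> \<epsilon> (Cinv q \<sigma> \<epsilon> (a(0 := 0)))"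
        proof (rule Cmap_cong[OF s])
          have "Cinv q \<sigma> \<epsilon> a = Cinv q \<sigma> \<epsilon> (a(0 := 0))" by (rule Cinv_cong[OF s]) simp
          then show "\<forall>k\<in>{1..q}. C1i q \<sigma> \<epsilon> a k = Cinv q \<sigma> \<epsilon> (a(0 := 0)) k"
            by (simp add: C1i_def)
        qed
        also have "\<dots> = a(0 := 0)" by (rule Cmap_Cinv[OF s a])
        finally show "C1 q \<sigma> \<epsilon> (C1i q \<sigma> \<epsilon> a) j = a j"
          by (cases "j = 0") (simp_all add: C1_def C1i_def)
      qed
      then have "Y = ?P (z, C1i q \<sigma> \<epsilon> a, t)" by (simp add: Yd Phi1_def)
      moreover have "(z, C1i q \<sigma> \<epsilon> a, t) \<in> car (osc1 q \<mu>)"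
        by (simp add: car_osc1 C1i_def Cinv_car)
      ultimately show "Y \<in> ?P ` car (osc1 q \<mu>)" by blast
    qed
  qed
  show ?thesis unfolding metric_lie_iso_def lie_iso_def
  proof (intro conjI ballI allI)
    show "bij_betw ?P (car (osc1 q \<mu>)) (car (osc1 q \<mu>'))" using inj img by (simp add: bij_betw_def)
  next
    fix X Y assume "X \<in> car (osc1 q \<mu>)" "Y \<in> car (osc1 q \<mu>)"
    obtain z a t z' a' t' where XY: "X = (z, a, t)" "Y = (z', a', t')" by (cases X, cases Y) auto
    show "?P (vadd (osc1 q \<mu>) X Y) = vadd (osc1 q \<mu>') (?P X) (?P Y)"
      by (simp add: XY Phi1_def vadd_osc1 C1_cadd)
  next
    fix c X assume "X \<in> car (osc1 q \<mu>)"
    obtain z a t where XY: "X = (z, a, t)" by (cases X) auto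
    show "?P (vscale (osc1 q \<mu>) c X) = vscale (osc1 q \<mu>') c (?P X)"
      by (simp add: XY Phi1_def vscale_osc1 C1_cscale)
  next
    fix X Y assume "X \<in> car (osc1 q \<mu>)" "Y \<in> car (osc1 q \<mu>)"
    obtain z a t z' a' t' where XY: "X = (z, a, t)" "Y = (z', a', t')" by (cases X, cases Y) auto
    show "?P (brk (osc1 q \<mu>) X Y) = brk (osc1 q \<mu>') (?P X) (?P Y)"
      by (simp add: XY Phi1_def brk_osc1 C1_cdiff C1_cscale C1_L[OF s e r, symmetric] C1_inner[OF s])
  next
    fix X Y assume "X \<in> car (osc1 q \<mu>)" "Y \<in> car (osc1 q \<mu>)"
    obtain z a t z' a' t' where XY: "X = (z, a, t)" "Y = (z', a', t')" by (cases X, cases Y) auto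
    show "frm (osc1 q \<mu>') (?P X) (?P Y) = frm (osc1 q \<mu>) X Y"
      by (simp add: XY Phi1_def frm_osc1 C1_inner[OF s])
  qed
qed

lemma parta:
  assumes \<mu>nz: "\<forall>j\<in>{1..q}. \<mu> j \<noteq> 0" and \<mu>'nz: "\<forall>j\<in>{1..q}. \<mu>' j \<noteq> 0"
  shows "lie_isomorphic (osc1 q \<mu>) (osc1 q \<mu>') \<longleftrightarrow> metric_isomorphic (osc1 q \<mu>) (osc1 q \<mu>')"
proof
  assume "metric_isomorphic (osc1 q \<mu>) (osc1 q \<mu>')"
  then show "lie_isomorphic (osc1 q \<mu>) (osc1 q \<mu>')"
    by (auto simp: metric_isomorphic_def lie_isomorphic_def metric_lie_iso_def)
next
  assume "lie_isomorphic (osc1 q \<mu>) (osc1 q \<mu>')"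
  then obtain f where f: "lie_iso (osc1 q \<mu>) (osc1 q \<mu>') f" by (auto simp: lie_isomorphic_def)
  obtain \<sigma> \<epsilon> where s: "\<sigma> permutes {1..q}" and e: "\<forall>j. \<epsilon> j \<in> {-1, 1::real}"
    and r: "\<forall>j\<in>{1..q}. \<mu>' j = \<epsilon> j * \<mu> (\<sigma> j)"
    using osc1_data[OF f \<mu>nz] by blast
  show "metric_isomorphic (osc1 q \<mu>) (osc1 q \<mu>')"
    unfolding metric_isomorphic_def using osc1_metric_iso[OF s e r] by blast
qed


theorem proposition2:
  fixes q :: nat
  shows
  "(\<forall>\<mu> \<mu>' :: nat \<Rightarrow> real.
      (\<forall>j\<in>{1..q}. \<mu> j \<noteq> 0) \<longrightarrow> (\<forall>j\<in>{1..q}. \<mu>' j \<noteq> 0) \<longrightarrow>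
      (lie_isomorphic (osc1 q \<mu>) (osc1 q \<mu>') \<longleftrightarrow> metric_isomorphic (osc1 q \<mu>) (osc1 q \<mu>')))
   \<and>
   (\<forall>\<mu> \<mu>' :: nat \<Rightarrow> real \<times> real.
      (\<forall>j\<in>{1..q}. \<mu> j \<noteq> 0) \<longrightarrow> (\<forall>j\<in>{1..q}. \<mu>' j \<noteq> 0) \<longrightarrow>
      (lie_isomorphic (osc2 q \<mu>) (osc2 q \<mu>') \<longleftrightarrow> metric_isomorphic (osc2 q \<mu>) (osc2 q \<mu>')))
   \<and>
   (\<forall>\<mu> \<mu>' :: nat \<Rightarrow> real \<times> real.
      (\<forall>j\<in>{1..q}. \<mu> j \<noteq> 0) \<longrightarrow> (\<forall>j\<in>{1..q}. \<mu>' j \<noteq> 0) \<longrightarrow>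
      (lie_isomorphic (dq q \<mu>) (dq q \<mu>') \<longleftrightarrow>
       equiv_signed_perm q (mu_image q \<mu>) (mu_image q \<mu>')))"
  proof (intro conjI allI impI)
  fix \<mu> \<mu>' :: "nat \<Rightarrow> real"
  assume "\<forall>j\<in>{1..q}. \<mu> j \<noteq> 0" "\<forall>j\<in>{1..q}. \<mu>' j \<noteq> 0"
  then show "lie_isomorphic (osc1 q \<mu>) (osc1 q \<mu>') \<longleftrightarrow> metric_isomorphic (osc1 q \<mu>) (osc1 q \<mu>')"
    by (rule parta)
next
  fix \<mu> \<mu>' :: "nat \<Rightarrow> real \<times> real"
  assume "\<forall>j\<in>{1..q}. \<mu> j \<noteq> 0" "\<forall>j\<in>{1..q}. \<mu>' j \<noteq> 0"
  then show "lie_isomorphic (osc2 q \<mu>) (osc2 q \<mu>') \<longleftrightarrow> metric_isomorphic (osc2 q \<mu>) (osc2 q \<mu>')"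
    by (rule partb)
next
  fix \<mu> \<mu>' :: "nat \<Rightarrow> real \<times> real"
  assume "\<forall>j\<in>{1..q}. \<mu> j \<noteq> 0" "\<forall>j\<in>{1..q}. \<mu>' j \<noteq> 0"
  then show "lie_isomorphic (dq q \<mu>) (dq q \<mu>') \<longleftrightarrow> equiv_signed_perm q (mu_image q \<mu>) (mu_image q \<mu>')"
    by (rule partc)
qed

end
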